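(* Let $d\ge2$, let $\theta_{\mathbf q}$ ($\mathbf q\in(\mathbb Z_d^2)^*$) be real numbers with $e^{i\theta_{\bar{\mathbf q}}}=s_{-\mathbf q}e^{-i\theta_{\mathbf q}}$, and let $\hat B=\frac{1}{\sqrt{d+1}}\sum_{\mathbf q\in(\mathbb Z_d^2)^*}e^{i\theta_{\mathbf q}}\hat D_{\mathbf q}$. Then $$\sum_{\substack{\mathbf p,\mathbf q\in\mathbb Z_d^2\\ \mathbf p,\mathbf q,\mathbf p\oplus\mathbf q\in(\mathbb Z_d^2)^*}} s_{\mathbf p+\mathbf q}\,\tau^{\langle\mathbf p,\mathbf q\rangle}\,e^{i(\theta_{\mathbf p}+\theta_{\mathbf q}-\theta_{\mathbf p\oplus\mathbf q})}\;\le\;(d-1)(d-2)(d+1)^{3/2}$$ (the left side being real), with equality if and only if $\frac1d(1+\hat B)$ is a rank-one projector, i.e. if and only if the operators $\hat E_{\mathbf p}=\frac{1}{d^2}(1+\hat D_{\mathbf p}\hat B\hat D_{\mathbf p}^\dagger)$, $\mathbf p\in\mathbb Z_d^2$, form a rank-one symmetric informationally complete POVM.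
   Context: Weyl–Heisenberg notation: orthonormal basis $|0\rangle,\dots,|d-1\rangle$ of $\mathbb C^d$, $\tau=-e^{\pi i/d}$, $\hat T|r\rangle=\tau^{2r}|r\rangle$, $\hat S|r\rangle=|r+1\bmod d\rangle$, $\hat D_{\mathbf p}=\tau^{p_1p_2}\hat S^{p_1}\hat T^{p_2}$ for $\mathbf p=(p_1,p_2)\in\mathbb Z^2$; $\langle\mathbf p,\mathbf q\rangle=p_2q_1-p_1q_2$; $\mathbb Z_d^2=\{0,\dots,d-1\}^2$, $(\mathbb Z_d^2)^*=\mathbb Z_d^2\setminus\{(0,0)\}$; $[\mathbf p]$ is the reduction of $\mathbf p$ mod $d$ into $\mathbb Z_d^2$, $\mathbf p\oplus\mathbf q=[\mathbf p+\mathbf q]$, $\bar{\mathbf p}=[-\mathbf p]$; $s_{\mathbf p}=1$ if $d$ odd and $s_{\mathbf p}=(-1)^{\langle\mathbf p,[\mathbf p]\rangle/d}$ if $d$ even. A rank-one symmetric informationally complete POVM is one whose $d^2$ elements are $\frac1d\hat P_r$ with rank-one projectors $\hat P_r$ satisfying $\operatorname{Tr}(\hat P_r\hat P_s)=\frac{1}{d+1}$ for $r\ne s$. *)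

theory Defs
  imports Complex_Main "Jordan_Normal_Form.Schur_Decomposition" "Jordan_Normal_Form.DL_Rank"
begin

definition tau :: "nat \<Rightarrow> complex" where
  "tau d = - exp (\<i> * complex_of_real (pi / real d))"

definition Zd2 :: "nat \<Rightarrow> (int \<times> int) set" where
  "Zd2 d = {0..<int d} \<times> {0..<int d}"

definition Zd2star :: "nat \<Rightarrow> (int \<times> int) set" where
  "Zd2star d = Zd2 d - {(0,0)}"

definition red :: "nat \<Rightarrow> int \<times> int \<Rightarrow> int \<times> int" where
  "red d p = (fst p mod int d, snd p mod int d)"

definition oplus :: "nat \<Rightarrow> int \<times> int \<Rightarrow> int \<times> int \<Rightarrow> int \<times> int" where
  "oplus d p q = red d (fst p + fst q, snd p + snd q)"

definition bar :: "nat \<Rightarrow> int \<times> int \<Rightarrow> int \<times> int" where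
  "bar d p = red d (- fst p, - snd p)"

definition symp :: "int \<times> int \<Rightarrow> int \<times> int \<Rightarrow> int" where
  "symp p q = snd p * fst q - fst p * snd q"

definition sgn_s :: "nat \<Rightarrow> int \<times> int \<Rightarrow> complex" where
  "sgn_s d p = (if odd d then 1 else (-1) powi (symp p (red d p) div int d))"

(* displacement operator D_p = tau^(p1 p2) S^p1 T^p2 written as a d x d matrix in the
   basis |0>,...,|d-1>:  S^p1 T^p2 |j> = tau^(2 j p2) |(j + p1) mod d>  *)
definition displ :: "nat \<Rightarrow> int \<times> int \<Rightarrow> complex mat" where
  "displ d p = mat d d (\<lambda>(i,j). if int i = (int j + fst p) mod int d
       then tau d powi (fst p * snd p) * tau d powi (2 * int j * snd p) else 0)"

definition msum :: "nat \<Rightarrow> ('i \<Rightarrow> complex mat) \<Rightarrow> 'i set \<Rightarrow> complex mat" where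
  "msum d f A = mat d d (\<lambda>ij. \<Sum>a\<in>A. f a $$ ij)"

definition mat_trace :: "complex mat \<Rightarrow> complex" where
  "mat_trace A = (\<Sum>i<dim_row A. A $$ (i,i))"

definition rank_one_projector :: "nat \<Rightarrow> complex mat \<Rightarrow> bool" where
  "rank_one_projector d P \<longleftrightarrow> P \<in> carrier_mat d d \<and> P * P = P \<and> mat_adjoint P = P
     \<and> vec_space.rank d P = 1"

definition rank_one_sic_povm :: "nat \<Rightarrow> (int \<times> int \<Rightarrow> complex mat) \<Rightarrow> bool" where
  "rank_one_sic_povm d E \<longleftrightarrow>
     (\<exists>P. (\<forall>r\<in>Zd2 d. rank_one_projector d (P r) \<and> E r = (1 / of_nat d) \<cdot>\<^sub>m P r)
        \<and> (\<forall>r\<in>Zd2 d. \<forall>s\<in>Zd2 d. r \<noteq> s \<longrightarrow> mat_trace (P r * P s) = 1 / of_nat (d + 1)))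
     \<and> msum d E (Zd2 d) = 1\<^sub>m d"

definition Bop :: "nat \<Rightarrow> (int \<times> int \<Rightarrow> real) \<Rightarrow> complex mat" where
  "Bop d theta = (1 / complex_of_real (sqrt (real d + 1))) \<cdot>\<^sub>m
     msum d (\<lambda>q. exp (\<i> * complex_of_real (theta q)) \<cdot>\<^sub>m displ d q) (Zd2star d)"

definition Eop :: "nat \<Rightarrow> (int \<times> int \<Rightarrow> real) \<Rightarrow> int \<times> int \<Rightarrow> complex mat" where
  "Eop d theta p = (1 / of_nat (d^2)) \<cdot>\<^sub>m
     (1\<^sub>m d + displ d p * Bop d theta * mat_adjoint (displ d p))"

end

theory Submission
  imports Defs "Jordan_Normal_Form.DL_Rank_Submatrix"
begin

lemma cis_shift: "a = b + 2 * pi * real_of_int n \<Longrightarrow> cis a = cis b"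
proof -
  assume "a = b + 2 * pi * real_of_int n"
  then have "cis a = cis b * cis (2 * pi * real_of_int n)" by (simp only: cis_mult)
  also have "cis (2 * pi * real_of_int n) = 1"
    by (simp add: complex_eq_iff cos_int_2pin sin_int_2pin)
  finally show ?thesis by simp
qed

lemma tau_cis: "d > 0 \<Longrightarrow> tau d = cis (pi * (real d + 1) / real d)"
proof -
  assume d: "d > 0"
  have "tau d = - cis (pi / real d)" by (simp add: tau_def cis_conv_exp mult.commute)
  also have "\<dots> = cis (pi / real d) * cis pi" by simp
  also have "\<dots> = cis (pi / real d + pi)" by (simp only: cis_mult)
  also have "pi / real d + pi = pi * (real d + 1) / real d" using d by (simp add: field_simps)
  finally show ?thesis .
qed

lemma tau_nz: "tau d \<noteq> 0" by (simp add: tau_def)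

lemma tau_powi: "d > 0 \<Longrightarrow> tau d powi k = cis (real_of_int k * (pi * (real d + 1) / real d))"
  by (simp add: tau_cis cis_power_int)

lemma tau_powi_cong: assumes d: "d > 0" and e: "a = b + 2 * int d * n"
  shows "tau d powi a = tau d powi b"
proof -
  have "real_of_int a * (pi * (real d + 1) / real d) = real_of_int b * (pi * (real d + 1) / real d)
        + 2 * pi * real_of_int (n * (int d + 1))"
    using d by (simp add: e field_simps)
  then have "cis (real_of_int a * (pi * (real d + 1) / real d)) = cis (real_of_int b * (pi * (real d + 1) / real d))"
    by (rule cis_shift)
  then show ?thesis using d by (simp only: tau_powi)
qed

lemma tau_powi_add: "tau d powi (a + b) = tau d powi a * tau d powi b"
  by (simp add: power_int_add tau_nz)

lemma tau_powi_cnj: "d > 0 \<Longrightarrow> cnj (tau d powi a) = tau d powi (- a)"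
  by (simp add: tau_powi cis_cnj)

lemma tau_powi_norm: assumes "d > 0" shows "cnj (tau d powi a) * tau d powi a = 1"
proof -
  have "cnj (tau d powi a) * tau d powi a = tau d powi (-a) * tau d powi a"
    using tau_powi_cnj[OF assms] by metis
  also have "\<dots> = tau d powi (-a + a)" by (simp only: tau_powi_add)
  finally show ?thesis by simp
qed

lemma tau_powi_d: assumes d: "d > 0" shows "tau d powi (int d * k) = (-1) powi ((int d + 1) * k)"
proof -
  have "tau d powi (int d * k) = cis (real_of_int k * (pi * (real d + 1)))"
    using d by (simp add: tau_powi)
  also have "\<dots> = cis (real_of_int ((int d + 1) * k) * pi)" by (simp add: algebra_simps)
  also have "\<dots> = cis pi powi ((int d + 1) * k)" by (simp only: cis_power_int)
  also have "cis pi = -1" by (simp add: complex_eq_iff)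
  finally show ?thesis .
qed

lemma minus_one_powi_cong: "a = b + 2 * n \<Longrightarrow> (-1::complex) powi a = (-1) powi b"
proof -
  assume e: "a = b + 2 * n"
  have "(-1::complex) powi a = (-1) powi b * ((-1) powi 2) powi n"
    by (simp add: e power_int_add power_int_mult)
  then show ?thesis by simp
qed

lemma tau2_powi_eq1: assumes d: "d > 0" and h: "tau d powi (2 * k) = 1" shows "int d dvd k"
proof -
  have "cis (real_of_int (2*k) * (pi * (real d + 1) / real d)) = 1" using h d by (simp add: tau_powi)
  then have "cos (real_of_int (2*k) * (pi * (real d + 1) / real d)) = 1"
    by (metis Re_complex_of_real complex.sel(1) cis.sel(1) one_complex.sel(1))
  then obtain n where n: "real_of_int (2*k) * (pi * (real d + 1) / real d) = real_of_int n * 2 * pi"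
    by (auto simp: cos_one_2pi_int)
  then have "2 * pi * (real_of_int k * (real d + 1)) = 2 * pi * (real_of_int n * real d)" using d
    by (simp add: field_simps)
  then have "real_of_int k * (real d + 1) = real_of_int n * real d" by simp
  then have "k * (int d + 1) = n * int d" by (metis (mono_tags) of_int_eq_iff of_int_mult of_int_add of_int_of_nat_eq of_int_1)
  then have "k = (n - k) * int d" by (simp add: algebra_simps)
  then show ?thesis by (metis dvd_triv_right)
qed

lemma geom_zero: fixes z :: complex assumes "z ^ d = 1" "z \<noteq> 1"
  shows "(\<Sum>k\<in>{0..<int d}. z powi k) = 0"
proof -
  have "{0..<int d} = int ` {..<d}" by (auto simp: image_iff) (metis int_eq_iff lessThan_iff nat_less_iff)
  then have "(\<Sum>k\<in>{0..<int d}. z powi k) = (\<Sum>k<d. z ^ k)"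
    by (simp add: sum.reindex)
  also have "\<dots> = 0" using assms by (simp add: geometric_sum)
  finally show ?thesis .
qed

lemma tau_geom_zero: assumes d: "d > 0" and nd: "\<not> int d dvd a"
  shows "(\<Sum>k\<in>{0..<int d}. tau d powi (2 * a * k)) = 0"
proof -
  let ?z = "tau d powi (2 * a)"
  have "?z ^ d = tau d powi (2 * a * int d)" by (simp add: power_int_power')
  also have "\<dots> = tau d powi 0" by (rule tau_powi_cong[OF d, of _ _ a]) simp
  finally have z1: "?z ^ d = 1" by simp
  have z2: "?z \<noteq> 1" using tau2_powi_eq1[OF d] nd by blast
  have "(\<Sum>k\<in>{0..<int d}. tau d powi (2 * a * k)) = (\<Sum>k\<in>{0..<int d}. ?z powi k)"
    by (simp add: power_int_mult)
  also have "\<dots> = 0" by (rule geom_zero[OF z1 z2])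
  finally show ?thesis .
qed

lemma sum_int_nat: "(\<Sum>k\<in>{0..<int d}. f k) = (\<Sum>k<d. f (int k))"
proof -
  have "{0..<int d} = int ` {..<d}" by (auto simp: image_iff) (metis int_eq_iff lessThan_iff nat_less_iff)
  then show ?thesis by (simp add: sum.reindex)
qed

lemma tau_geom_zero_nat: assumes "d > 0" "\<not> int d dvd a"
  shows "(\<Sum>k<d. tau d powi (2 * a * int k)) = 0"
  using tau_geom_zero[OF assms] by (simp add: sum_int_nat)

lemma mult_entry: assumes "A \<in> carrier_mat n n" "B \<in> carrier_mat n n" "i < n" "j < n"
  shows "(A * B) $$ (i,j) = (\<Sum>k<n. A $$ (i,k) * B $$ (k,j))"
  using assms by (simp add: scalar_prod_def atLeast0LessThan)

lemma adj_dims[simp]: fixes A :: "complex mat" shows "dim_row (mat_adjoint A) = dim_col A" "dim_col (mat_adjoint A) = dim_row A"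
  by (simp_all add: mat_adjoint_def)

lemma adj_entry[simp]: fixes A :: "complex mat" shows "i < dim_col A \<Longrightarrow> j < dim_row A \<Longrightarrow> mat_adjoint A $$ (i,j) = cnj (A $$ (j,i))"
  by (simp add: mat_adjoint_def mat_of_rows_index)

lemma adj_carrier[simp]: fixes A :: "complex mat" shows "A \<in> carrier_mat n m \<Longrightarrow> mat_adjoint A \<in> carrier_mat m n"
  unfolding carrier_mat_def by simp

lemma adj_adj: fixes A :: "complex mat" shows "mat_adjoint (mat_adjoint A) = A"
  by (rule eq_matI) simp_all

lemma adj_mult: fixes A B :: "complex mat" assumes "A \<in> carrier_mat n n" "B \<in> carrier_mat n n"
  shows "mat_adjoint (A * B) = mat_adjoint B * mat_adjoint A"
proof (rule eq_matI)
  fix i j assume ij: "i < dim_row (mat_adjoint B * mat_adjoint A)" "j < dim_col (mat_adjoint B * mat_adjoint A)"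
  then have i: "i < n" and j: "j < n" using assms by auto
  have "mat_adjoint (A * B) $$ (i,j) = cnj (\<Sum>k<n. A $$ (j,k) * B $$ (k,i))"
    using assms i j by (simp add: mult_entry del: index_mult_mat(1))
  also have "\<dots> = (\<Sum>k<n. cnj (B $$ (k,i)) * cnj (A $$ (j,k)))" by (simp add: mult.commute)
  also have "\<dots> = (mat_adjoint B * mat_adjoint A) $$ (i,j)"
    using assms i j by (simp add: mult_entry[of _ n] del: index_mult_mat(1))
  finally show "mat_adjoint (A * B) $$ (i,j) = (mat_adjoint B * mat_adjoint A) $$ (i,j)" .
qed (use assms in auto)

lemma adj_smult: fixes A :: "complex mat" shows "mat_adjoint (c \<cdot>\<^sub>m A) = cnj c \<cdot>\<^sub>m mat_adjoint A"
  by (rule eq_matI) auto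

lemma adj_add: fixes A B :: "complex mat" assumes "A \<in> carrier_mat n n" "B \<in> carrier_mat n n"
  shows "mat_adjoint (A + B) = mat_adjoint A + mat_adjoint B"
  by (rule eq_matI) (use assms in auto)

lemma adj_one: "mat_adjoint (1\<^sub>m n :: complex mat) = 1\<^sub>m n"
  by (rule eq_matI) auto

lemma trace_comm: fixes A B :: "complex mat" assumes "A \<in> carrier_mat n n" "B \<in> carrier_mat n n"
  shows "mat_trace (A * B) = mat_trace (B * A)"
proof -
  have "mat_trace (A * B) = (\<Sum>i<n. \<Sum>k<n. A $$ (i,k) * B $$ (k,i))"
    using assms unfolding mat_trace_def by (intro sum.cong) (auto simp: mult_entry simp del: index_mult_mat(1))
  also have "\<dots> = (\<Sum>k<n. \<Sum>i<n. B $$ (k,i) * A $$ (i,k))"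
    by (subst sum.swap) (simp add: mult.commute)
  also have "\<dots> = mat_trace (B * A)"
    using assms unfolding mat_trace_def by (intro sum.cong) (auto simp: mult_entry simp del: index_mult_mat(1))
  finally show ?thesis .
qed

lemma trace_add: fixes A B :: "complex mat" assumes "A \<in> carrier_mat n n" "B \<in> carrier_mat n n"
  shows "mat_trace (A + B) = mat_trace A + mat_trace B"
  using assms by (simp add: mat_trace_def sum.distrib)

lemma trace_smult: assumes "A \<in> carrier_mat n n" shows "mat_trace (c \<cdot>\<^sub>m A) = c * mat_trace A"
  using assms unfolding mat_trace_def sum_distrib_left by (intro sum.cong) auto

lemma trace_one: "mat_trace (1\<^sub>m n) = of_nat n"
  by (simp add: mat_trace_def)


lemma displ_carrier[simp]: "displ d p \<in> carrier_mat d d"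
  by (simp add: displ_def)

lemma displ_dims[simp]: "dim_row (displ d p) = d" "dim_col (displ d p) = d"
  by (simp_all add: displ_def)

lemma displ_entry: "i < d \<Longrightarrow> j < d \<Longrightarrow> displ d p $$ (i,j) =
   (if int i = (int j + fst p) mod int d then tau d powi (fst p * snd p + 2 * int j * snd p) else 0)"
  by (simp add: displ_def tau_powi_add)

lemma idx_equiv: assumes "i < d" "k < d"
  shows "(int i = (int k + a) mod int d) \<longleftrightarrow> (int k = (int i - a) mod int d)"
proof
  assume h: "int i = (int k + a) mod int d"
  have "(int i - a) mod int d = ((int k + a) mod int d - a) mod int d" by (simp add: h)
  also have "\<dots> = int k mod int d" by (simp add: mod_diff_left_eq)
  also have "\<dots> = int k" using assms by simp
  finally show "int k = (int i - a) mod int d" by simp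
next
  assume h: "int k = (int i - a) mod int d"
  have "(int k + a) mod int d = ((int i - a) mod int d + a) mod int d" by (simp add: h)
  also have "\<dots> = int i mod int d" by (simp add: mod_add_left_eq)
  also have "\<dots> = int i" using assms by simp
  finally show "int i = (int k + a) mod int d" by simp
qed

lemma displ_mult_right: assumes M: "M \<in> carrier_mat d d" and ij: "i < d" "j < d"
  shows "(M * displ d q) $$ (i,j) = M $$ (i, nat ((int j + fst q) mod int d))
            * tau d powi (fst q * snd q + 2 * int j * snd q)"
proof -
  have d: "d > 0" using ij by simp
  let ?k = "nat ((int j + fst q) mod int d)"
  have k: "?k < d" using d by (simp add: nat_less_iff)
  have "(M * displ d q) $$ (i,j) = (\<Sum>k<d. M $$ (i,k) * displ d q $$ (k,j))"
    by (rule mult_entry[OF M displ_carrier ij])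
  also have "\<dots> = (\<Sum>k<d. if k = ?k then M $$ (i,k) * tau d powi (fst q * snd q + 2 * int j * snd q) else 0)"
  proof (rule sum.cong[OF refl])
    fix k assume "k \<in> {..<d}"
    then have "k < d" by simp
    then have "(int k = (int j + fst q) mod int d) = (k = ?k)" using d by auto
    then show "M $$ (i,k) * displ d q $$ (k,j) = (if k = ?k then M $$ (i,k) * tau d powi (fst q * snd q + 2 * int j * snd q) else 0)"
      using \<open>k < d\<close> ij by (simp add: displ_entry)
  qed
  also have "\<dots> = M $$ (i, ?k) * tau d powi (fst q * snd q + 2 * int j * snd q)"
    using k by (simp add: sum.delta)
  finally show ?thesis .
qed

lemma displ_mult_left: assumes M: "M \<in> carrier_mat d d" and ij: "i < d" "j < d"
  shows "(displ d p * M) $$ (i,j) = tau d powi (fst p * snd p + 2 * ((int i - fst p) mod int d) * snd p)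
            * M $$ (nat ((int i - fst p) mod int d), j)"
proof -
  have d: "d > 0" using ij by simp
  let ?k = "nat ((int i - fst p) mod int d)"
  have k: "?k < d" using d by (simp add: nat_less_iff)
  have "(displ d p * M) $$ (i,j) = (\<Sum>k<d. displ d p $$ (i,k) * M $$ (k,j))"
    by (rule mult_entry[OF displ_carrier M ij])
  also have "\<dots> = (\<Sum>k<d. if k = ?k then tau d powi (fst p * snd p + 2 * ((int i - fst p) mod int d) * snd p) * M $$ (k,j) else 0)"
  proof (rule sum.cong[OF refl])
    fix k assume "k \<in> {..<d}"
    then have "k < d" by simp
    then have e: "(int i = (int k + fst p) mod int d) = (k = ?k)" using d ij idx_equiv by auto
    show "displ d p $$ (i,k) * M $$ (k,j) = (if k = ?k then tau d powi (fst p * snd p + 2 * ((int i - fst p) mod int d) * snd p) * M $$ (k,j) else 0)"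
      using \<open>k < d\<close> ij e d by (auto simp add: displ_entry)
  qed
  also have "\<dots> = tau d powi (fst p * snd p + 2 * ((int i - fst p) mod int d) * snd p) * M $$ (?k, j)"
    using k by (simp add: sum.delta)
  finally show ?thesis .
qed

lemma mod_decomp: "(a::int) mod b = a - b * (a div b)"
  using div_mult_mod_eq[of a b] by (simp add: algebra_simps)

lemma displ_mul: assumes d: "d > 0"
  shows "displ d p * displ d q = tau d powi (symp p q) \<cdot>\<^sub>m displ d (fst p + fst q, snd p + snd q)"
proof (rule eq_matI)
  fix i j assume "i < dim_row (tau d powi (symp p q) \<cdot>\<^sub>m displ d (fst p + fst q, snd p + snd q))"
    "j < dim_col (tau d powi (symp p q) \<cdot>\<^sub>m displ d (fst p + fst q, snd p + snd q))"
  then have i: "i < d" and j: "j < d" by auto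
  define k where "k = (int j + fst q) mod int d"
  have k0: "0 \<le> k" "k < int d" using d by (auto simp: k_def)
  have nk: "int (nat k) = k" "nat k < d" using k0 by auto
  have ke: "k = int j + fst q - int d * ((int j + fst q) div int d)" unfolding k_def by (rule mod_decomp)
  have "(k + fst p) mod int d = ((int j + fst q) + fst p) mod int d" unfolding k_def by (rule mod_add_left_eq)
  then have cond: "(k + fst p) mod int d = (int j + (fst p + fst q)) mod int d" by (simp add: add_ac)
  have "(displ d p * displ d q) $$ (i,j) = displ d p $$ (i, nat k) * tau d powi (fst q * snd q + 2 * int j * snd q)"
    using displ_mult_right[OF displ_carrier i j] by (simp add: k_def)
  also have "\<dots> = (if int i = (k + fst p) mod int d then tau d powi (fst p * snd p + 2 * k * snd p) else 0)
       * tau d powi (fst q * snd q + 2 * int j * snd q)"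
    using displ_entry[OF i nk(2)] nk by simp
  also have "\<dots> = tau d powi (symp p q) * (if int i = (int j + (fst p + fst q)) mod int d
      then tau d powi ((fst p + fst q) * (snd p + snd q) + 2 * int j * (snd p + snd q)) else 0)"
  proof (cases "int i = (k + fst p) mod int d")
    case True
    have "tau d powi (fst p * snd p + 2 * k * snd p) * tau d powi (fst q * snd q + 2 * int j * snd q)
      = tau d powi ((fst p * snd p + 2 * k * snd p) + (fst q * snd q + 2 * int j * snd q))"
      by (simp add: tau_powi_add)
    also have "\<dots> = tau d powi (symp p q + ((fst p + fst q) * (snd p + snd q) + 2 * int j * (snd p + snd q)))"
      by (rule tau_powi_cong[OF d, where n = "- ((int j + fst q) div int d) * snd p"])
         (simp add: ke symp_def algebra_simps)
    also have "\<dots> = tau d powi (symp p q) * tau d powi ((fst p + fst q) * (snd p + snd q) + 2 * int j * (snd p + snd q))"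
      by (simp add: tau_powi_add)
    finally show ?thesis using True cond by simp
  next
    case False then show ?thesis using cond by simp
  qed
  also have "\<dots> = (tau d powi (symp p q) \<cdot>\<^sub>m displ d (fst p + fst q, snd p + snd q)) $$ (i,j)"
    using i j by (simp add: displ_entry)
  finally show "(displ d p * displ d q) $$ (i,j) = (tau d powi (symp p q) \<cdot>\<^sub>m displ d (fst p + fst q, snd p + snd q)) $$ (i,j)" .
qed auto

lemma tau_cnj_powi: "d > 0 \<Longrightarrow> cnj (tau d) powi a = tau d powi (- a)"
  using tau_powi_cnj[of d a] by simp

lemma displ_adj: assumes d: "d > 0"
  shows "mat_adjoint (displ d p) = displ d (- fst p, - snd p)"
proof (rule eq_matI)
  fix i j assume "i < dim_row (displ d (- fst p, - snd p))" "j < dim_col (displ d (- fst p, - snd p))"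
  then have i: "i < d" and j: "j < d" by auto
  have ce: "(int j = (int i + fst p) mod int d) = (int i = (int j + - fst p) mod int d)"
    using idx_equiv[OF j i, of "fst p"] by simp
  have "mat_adjoint (displ d p) $$ (i,j) = cnj (displ d p $$ (j,i))" using i j by simp
  also have "\<dots> = (if int j = (int i + fst p) mod int d then tau d powi (- (fst p * snd p + 2 * int i * snd p)) else 0)"
    using i j d by (simp add: displ_entry tau_cnj_powi)
  also have "\<dots> = displ d (- fst p, - snd p) $$ (i,j)"
  proof (cases "int j = (int i + fst p) mod int d")
    case True
    have je: "int j = int i + fst p - int d * ((int i + fst p) div int d)" using True mod_decomp by simp
    have "tau d powi (- (fst p * snd p + 2 * int i * snd p)) = tau d powi (fst p * snd p + 2 * int j * (- snd p))"
      by (rule tau_powi_cong[OF d, where n = "- ((int i + fst p) div int d) * snd p"])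
         (simp add: je algebra_simps)
    then show ?thesis using True ce i j by (simp add: displ_entry)
  next
    case False then show ?thesis using ce i j by (simp add: displ_entry)
  qed
  finally show "mat_adjoint (displ d p) $$ (i,j) = displ d (- fst p, - snd p) $$ (i,j)" .
qed auto

lemma sign_lemma: assumes d: "d > 0"
  shows "tau d powi (fst p * snd p + 2 * int j * snd p)
     = sgn_s d p * tau d powi ((fst p mod int d) * (snd p mod int d) + 2 * int j * (snd p mod int d))"
proof -
  define r1 where "r1 = fst p mod int d"
  define r2 where "r2 = snd p mod int d"
  define m1 where "m1 = fst p div int d"
  define m2 where "m2 = snd p div int d"
  have p1: "fst p = r1 + int d * m1" unfolding r1_def m1_def using mod_decomp[of "fst p" "int d"] by simp
  have p2: "snd p = r2 + int d * m2" unfolding r2_def m2_def using mod_decomp[of "snd p" "int d"] by simp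
  define X where "X = r1 * m2 + m1 * r2 + int d * m1 * m2 + 2 * int j * m2"
  have "fst p * snd p + 2 * int j * snd p = (r1 * r2 + 2 * int j * r2) + int d * X"
    by (simp add: p1 p2 X_def algebra_simps)
  then have "tau d powi (fst p * snd p + 2 * int j * snd p) = tau d powi (r1 * r2 + 2 * int j * r2) * tau d powi (int d * X)"
    by (simp add: tau_powi_add)
  also have "tau d powi (int d * X) = (-1) powi ((int d + 1) * X)" by (rule tau_powi_d[OF d])
  also have "(-1::complex) powi ((int d + 1) * X) = sgn_s d p"
  proof (cases "odd d")
    case True
    then obtain e where e: "int d + 1 = 2 * e" by (metis even_plus_one_iff even_of_nat_iff evenE)
    have "(-1::complex) powi ((int d + 1) * X) = (-1) powi 0"
      by (rule minus_one_powi_cong[where n = "e * X"]) (simp add: e)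
    then show ?thesis using True by (simp add: sgn_s_def)
  next
    case False
    then obtain e where e: "int d = 2 * e" by (metis even_of_nat_iff evenE)
    have redp: "red d p = (r1, r2)" by (simp add: red_def r1_def r2_def)
    have sy: "symp p (red d p) = int d * (m2 * r1 - m1 * r2)"
      unfolding redp symp_def by (simp add: p1 p2 algebra_simps)
    have "symp p (red d p) div int d = m2 * r1 - m1 * r2" using d by (simp add: sy)
    moreover have "(-1::complex) powi ((int d + 1) * X) = (-1) powi (m2 * r1 - m1 * r2)"
      by (rule minus_one_powi_cong[where n = "e * X + m1 * r2 + e * m1 * m2 + int j * m2"])
         (simp add: X_def e algebra_simps)
    ultimately show ?thesis using False by (simp add: sgn_s_def)
  qed
  finally show ?thesis by (simp add: r1_def r2_def mult.commute)
qed

lemma displ_red: assumes d: "d > 0"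
  shows "displ d p = sgn_s d p \<cdot>\<^sub>m displ d (red d p)"
proof (rule eq_matI)
  fix i j assume "i < dim_row (sgn_s d p \<cdot>\<^sub>m displ d (red d p))" "j < dim_col (sgn_s d p \<cdot>\<^sub>m displ d (red d p))"
  then have i: "i < d" and j: "j < d" by auto
  have c: "(int j + fst p mod int d) mod int d = (int j + fst p) mod int d" by (simp add: mod_add_right_eq)
  show "displ d p $$ (i,j) = (sgn_s d p \<cdot>\<^sub>m displ d (red d p)) $$ (i,j)"
    using i j c sign_lemma[OF d, of p j] by (simp add: displ_entry red_def)
qed auto

lemma displ_zero: assumes d: "d > 0" shows "displ d (0,0) = 1\<^sub>m d"
proof (rule eq_matI)
  fix i j assume "i < dim_row (1\<^sub>m d)" "j < dim_col (1\<^sub>m d)"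
  then have i: "i < d" and j: "j < d" by auto
  then have "(int i = int j mod int d) = (i = j)" by auto
  then show "displ d (0,0) $$ (i,j) = 1\<^sub>m d $$ (i,j)" using i j by (simp add: displ_entry)
qed auto

lemma red_Zd2: "d > 0 \<Longrightarrow> red d p \<in> Zd2 d"
  by (simp add: red_def Zd2_def)

lemma red_id: "p \<in> Zd2 d \<Longrightarrow> red d p = p"
  by (cases p) (auto simp: red_def Zd2_def)

lemma red_zero_iff: "red d p = (0,0) \<longleftrightarrow> int d dvd fst p \<and> int d dvd snd p"
  by (cases p) (auto simp: red_def)

lemma trace_displ: assumes p: "p \<in> Zd2star d"
  shows "mat_trace (displ d p) = 0"
proof -
  have d: "d > 0" using p by (auto simp: Zd2star_def Zd2_def)
  have p1: "0 \<le> fst p" "fst p < int d" and p2: "0 \<le> snd p" "snd p < int d" and pnz: "p \<noteq> (0,0)"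
    using p by (auto simp: Zd2star_def Zd2_def)
  have "mat_trace (displ d p) = (\<Sum>i<d. displ d p $$ (i,i))" by (simp add: mat_trace_def)
  also have "\<dots> = (\<Sum>i<d. if int i = (int i + fst p) mod int d then tau d powi (fst p * snd p + 2 * int i * snd p) else 0)"
    by (rule sum.cong) (simp_all add: displ_entry)
  also have "\<dots> = 0"
  proof (cases "fst p = 0")
    case True
    then have "snd p \<noteq> 0" using pnz by (cases p) auto
    then have nd: "\<not> int d dvd snd p" using p2 zdvd_imp_le by fastforce
    have "(\<Sum>i<d. if int i = (int i + fst p) mod int d then tau d powi (fst p * snd p + 2 * int i * snd p) else 0)
        = (\<Sum>i<d. tau d powi (2 * snd p * int i))"
      by (rule sum.cong) (simp_all add: True mult_ac)
    also have "\<dots> = 0" by (rule tau_geom_zero_nat[OF d nd])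
    finally show ?thesis .
  next
    case False
    have "\<not> int i = (int i + fst p) mod int d" for i
    proof
      assume h: "int i = (int i + fst p) mod int d"
      have "int d dvd (int i + fst p) - (int i + fst p) mod int d" by (simp add: dvd_minus_mod)
      then have "int d dvd fst p" using h by simp
      then show False using False p1 zdvd_imp_le by fastforce
    qed
    then show ?thesis by simp
  qed
  finally show ?thesis .
qed

lemma smult_smult_mat: "a \<cdot>\<^sub>m (b \<cdot>\<^sub>m A) = (a * b) \<cdot>\<^sub>m (A :: complex mat)"
  by (rule eq_matI) auto

lemma one_smult_mat': "(1::complex) \<cdot>\<^sub>m A = A"
  by (rule eq_matI) auto

lemma displ_unit1: assumes d: "d > 0" shows "displ d p * mat_adjoint (displ d p) = 1\<^sub>m d"
  using d by (simp add: displ_adj displ_mul displ_zero symp_def one_smult_mat')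

lemma displ_unit2: assumes d: "d > 0" shows "mat_adjoint (displ d p) * displ d p = 1\<^sub>m d"
  using d by (simp add: displ_adj displ_mul displ_zero symp_def one_smult_mat')

lemma displ_conj: assumes d: "d > 0"
  shows "mat_adjoint (displ d u) * displ d p * displ d u = tau d powi (2 * symp p u) \<cdot>\<^sub>m displ d p"
proof -
  have "mat_adjoint (displ d u) * displ d p * displ d u
     = (tau d powi (symp (- fst u, - snd u) p) \<cdot>\<^sub>m displ d (- fst u + fst p, - snd u + snd p)) * displ d u"
    using d by (simp add: displ_adj displ_mul)
  also have "\<dots> = tau d powi (symp (- fst u, - snd u) p) \<cdot>\<^sub>m (displ d (- fst u + fst p, - snd u + snd p) * displ d u)"
    by (rule mult_smult_assoc_mat) auto
  also have "\<dots> = tau d powi (symp (- fst u, - snd u) p) \<cdot>\<^sub>m (tau d powi (symp (- fst u + fst p, - snd u + snd p) u) \<cdot>\<^sub>m displ d p)"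
    using d by (simp add: displ_mul)
  also have "\<dots> = tau d powi (2 * symp p u) \<cdot>\<^sub>m displ d p"
    by (simp add: smult_smult_mat tau_powi_add[symmetric] symp_def algebra_simps)
  finally show ?thesis .
qed

lemma displ_conj2: assumes d: "d > 0"
  shows "displ d r * displ d q * mat_adjoint (displ d r) = tau d powi (2 * symp q (- fst r, - snd r)) \<cdot>\<^sub>m displ d q"
proof -
  have a: "mat_adjoint (displ d (- fst r, - snd r)) = displ d r" using d by (simp add: displ_adj)
  have b: "mat_adjoint (displ d r) = displ d (- fst r, - snd r)" using d by (simp add: displ_adj)
  show ?thesis using displ_conj[OF d, of "(- fst r, - snd r)" q] unfolding a b .
qed

lemma zd2_eq: assumes "p \<in> Zd2 d" "q \<in> Zd2 d" "int d dvd fst p - fst q" "int d dvd snd p - snd q"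
  shows "p = q"
proof -
  have r: "0 \<le> fst p" "fst p < int d" "0 \<le> snd p" "snd p < int d"
          "0 \<le> fst q" "fst q < int d" "0 \<le> snd q" "snd q < int d"
    using assms(1,2) unfolding Zd2_def mem_Times_iff atLeastLessThan_iff by simp_all
  have a: "fst p mod int d = fst p" "fst q mod int d = fst q" "snd p mod int d = snd p" "snd q mod int d = snd q"
    using r by (simp_all add: mod_pos_pos_trivial)
  have b: "fst p mod int d = fst q mod int d" "snd p mod int d = snd q mod int d"
    using assms(3,4) by (simp_all add: mod_eq_dvd_iff)
  have "fst p = fst q" "snd p = snd q" by (metis a(1) a(2) b(1)) (metis a(3) a(4) b(2))
  then show ?thesis by (simp add: prod_eq_iff)
qed

lemma red_diff_star: assumes "p \<in> Zd2 d" "q \<in> Zd2 d" "p \<noteq> q"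
  shows "red d (fst p - fst q, snd p - snd q) \<in> Zd2star d"
proof -
  have d: "d > 0" using assms by (auto simp: Zd2_def)
  have "red d (fst p - fst q, snd p - snd q) \<noteq> (0,0)"
    using zd2_eq[OF assms(1,2)] assms(3) by (auto simp: red_zero_iff)
  then show ?thesis using red_Zd2[OF d] by (simp add: Zd2star_def)
qed

lemma trace_orth: assumes p: "p \<in> Zd2 d" and q: "q \<in> Zd2 d"
  shows "mat_trace (displ d p * mat_adjoint (displ d q)) = (if p = q then of_nat d else 0)"
proof -
  have d: "d > 0" using p by (auto simp: Zd2_def)
  show ?thesis
  proof (cases "p = q")
    case True then show ?thesis using d by (simp add: displ_unit1 trace_one)
  next
    case False
    let ?r = "red d (fst p - fst q, snd p - snd q)"
    have "displ d p * mat_adjoint (displ d q) = tau d powi (symp p (- fst q, - snd q)) \<cdot>\<^sub>m displ d (fst p - fst q, snd p - snd q)"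
      using d by (simp add: displ_adj displ_mul)
    also have "\<dots> = tau d powi (symp p (- fst q, - snd q)) \<cdot>\<^sub>m (sgn_s d (fst p - fst q, snd p - snd q) \<cdot>\<^sub>m displ d ?r)"
      using displ_red[OF d, of "(fst p - fst q, snd p - snd q)"] by simp
    finally have e: "displ d p * mat_adjoint (displ d q) = (tau d powi (symp p (- fst q, - snd q)) * sgn_s d (fst p - fst q, snd p - snd q)) \<cdot>\<^sub>m displ d ?r"
      by (simp add: smult_smult_mat)
    have "mat_trace (displ d ?r) = 0" by (rule trace_displ[OF red_diff_star[OF p q False]])
    then show ?thesis using False by (simp add: e trace_smult[OF displ_carrier])
  qed
qed

lemma trace_triple: assumes p: "p \<in> Zd2 d" and q: "q \<in> Zd2 d" and r: "r \<in> Zd2 d"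
  shows "mat_trace (displ d p * displ d q * mat_adjoint (displ d r))
    = tau d powi (symp p q) * sgn_s d (fst p + fst q, snd p + snd q) * (if r = oplus d p q then of_nat d else 0)"
proof -
  have d: "d > 0" using p by (auto simp: Zd2_def)
  let ?s = "red d (fst p + fst q, snd p + snd q)"
  have s: "?s \<in> Zd2 d" using red_Zd2[OF d] .
  have "displ d p * displ d q = (tau d powi (symp p q) * sgn_s d (fst p + fst q, snd p + snd q)) \<cdot>\<^sub>m displ d ?s"
    using d displ_red[OF d, of "(fst p + fst q, snd p + snd q)"] by (simp add: displ_mul smult_smult_mat)
  then have "displ d p * displ d q * mat_adjoint (displ d r)
     = (tau d powi (symp p q) * sgn_s d (fst p + fst q, snd p + snd q)) \<cdot>\<^sub>m (displ d ?s * mat_adjoint (displ d r))"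
    by (simp add: mult_smult_assoc_mat[of _ d d _ d])
  moreover have c: "displ d ?s * mat_adjoint (displ d r) \<in> carrier_mat d d"
    using mult_carrier_mat[OF displ_carrier adj_carrier[OF displ_carrier]] .
  ultimately have "mat_trace (displ d p * displ d q * mat_adjoint (displ d r))
     = (tau d powi (symp p q) * sgn_s d (fst p + fst q, snd p + snd q)) * mat_trace (displ d ?s * mat_adjoint (displ d r))"
    using trace_smult[OF c] by simp
  then show ?thesis using trace_orth[OF s r] by (auto simp: oplus_def)
qed

lemma char_sum_gen: assumes d: "d > 0" and ab: "\<not> (int d dvd a \<and> int d dvd b)"
  shows "(\<Sum>x\<in>Zd2 d. tau d powi (2 * (a * fst x + b * snd x))) = 0"
proof -
  have "(\<Sum>x\<in>Zd2 d. tau d powi (2 * (a * fst x + b * snd x)))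
     = (\<Sum>x\<in>{0..<int d}. \<Sum>y\<in>{0..<int d}. tau d powi (2 * a * x) * tau d powi (2 * b * y))"
    unfolding Zd2_def sum.cartesian_product by (rule sum.cong) (auto simp: tau_powi_add[symmetric] algebra_simps)
  also have "\<dots> = (\<Sum>x\<in>{0..<int d}. tau d powi (2 * a * x)) * (\<Sum>y\<in>{0..<int d}. tau d powi (2 * b * y))"
    by (simp add: sum_product)
  also have "\<dots> = 0"
  proof (cases "int d dvd a")
    case True
    then have "\<not> int d dvd b" using ab by simp
    then show ?thesis using tau_geom_zero[OF d] by simp
  next
    case False
    then show ?thesis using tau_geom_zero[OF d] by simp
  qed
  finally show ?thesis .
qed

lemma star_not_dvd: "q \<in> Zd2star d \<Longrightarrow> \<not> (int d dvd fst q \<and> int d dvd snd q)"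
  using red_id[of q d] red_zero_iff[of d q] by (auto simp: Zd2star_def)

lemma star_not_dvd': "q \<in> Zd2star d \<Longrightarrow> \<not> (int d dvd - snd q \<and> int d dvd fst q)"
  "q \<in> Zd2star d \<Longrightarrow> \<not> (int d dvd snd q \<and> int d dvd - fst q)"
  using star_not_dvd[of q d] by auto

lemma char_sum_r: assumes q: "q \<in> Zd2star d"
  shows "(\<Sum>r\<in>Zd2 d. tau d powi (2 * symp q (- fst r, - snd r))) = 0"
proof -
  have d: "d > 0" using q by (auto simp: Zd2star_def Zd2_def)
  have "(\<Sum>r\<in>Zd2 d. tau d powi (2 * symp q (- fst r, - snd r)))
      = (\<Sum>r\<in>Zd2 d. tau d powi (2 * ((- snd q) * fst r + fst q * snd r)))"
    by (rule sum.cong) (auto simp: symp_def algebra_simps)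
  also have "\<dots> = 0" by (rule char_sum_gen[OF d star_not_dvd'(1)[OF q]])
  finally show ?thesis .
qed

lemma Zd2_finite[simp]: "finite (Zd2 d)" by (simp add: Zd2_def)
lemma Zd2star_finite[simp]: "finite (Zd2star d)" by (simp add: Zd2star_def)
lemma zero_Zd2: "d > 0 \<Longrightarrow> (0,0) \<in> Zd2 d" by (simp add: Zd2_def)
lemma Zd2star_sub: "Zd2star d \<subseteq> Zd2 d" by (auto simp: Zd2star_def)

lemma char_sum_q: assumes u: "u \<in> Zd2star d"
  shows "(\<Sum>q\<in>Zd2star d. tau d powi (2 * symp q (- fst u, - snd u))) = -1"
proof -
  have d: "d > 0" using u by (auto simp: Zd2star_def Zd2_def)
  have "(\<Sum>q\<in>Zd2 d. tau d powi (2 * symp q (- fst u, - snd u)))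
      = (\<Sum>q\<in>Zd2 d. tau d powi (2 * (snd u * fst q + (- fst u) * snd q)))"
    by (rule sum.cong) (auto simp: symp_def algebra_simps)
  also have "\<dots> = 0" by (rule char_sum_gen[OF d star_not_dvd'(2)[OF u]])
  finally have z: "(\<Sum>q\<in>Zd2 d. tau d powi (2 * symp q (- fst u, - snd u))) = 0" .
  have "(\<Sum>q\<in>Zd2 d. tau d powi (2 * symp q (- fst u, - snd u)))
     = tau d powi (2 * symp (0,0) (- fst u, - snd u)) + (\<Sum>q\<in>Zd2star d. tau d powi (2 * symp q (- fst u, - snd u)))"
    unfolding Zd2star_def using zero_Zd2[OF d] by (simp add: sum.remove)
  then show ?thesis using z by (simp add: symp_def add_eq_0_iff)
qed

lemma card_Zd2star: "card (Zd2star d) = d^2 - 1"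
proof -
  have "card (Zd2 d) = d^2" by (simp add: Zd2_def power2_eq_square)
  then show ?thesis
    by (cases "d = 0") (auto simp: Zd2star_def Zd2_def card_Diff_singleton)
qed

lemma msum_carrier[simp]: "msum d f A \<in> carrier_mat d d"
  by (simp add: msum_def)

lemma msum_dims[simp]: "dim_row (msum d f A) = d" "dim_col (msum d f A) = d"
  by (simp_all add: msum_def)

lemma msum_entry: "i < d \<Longrightarrow> j < d \<Longrightarrow> msum d f A $$ (i,j) = (\<Sum>a\<in>A. f a $$ (i,j))"
  by (simp add: msum_def)

lemma msum_mult_right: assumes f: "\<And>a. a \<in> A \<Longrightarrow> f a \<in> carrier_mat d d" and M: "M \<in> carrier_mat d d"
  shows "msum d f A * M = msum d (\<lambda>a. f a * M) A"
proof (rule eq_matI)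
  fix i j assume "i < dim_row (msum d (\<lambda>a. f a * M) A)" "j < dim_col (msum d (\<lambda>a. f a * M) A)"
  then have i: "i < d" and j: "j < d" by auto
  have "(msum d f A * M) $$ (i,j) = (\<Sum>k<d. msum d f A $$ (i,k) * M $$ (k,j))"
    by (rule mult_entry[OF msum_carrier M i j])
  also have "\<dots> = (\<Sum>k<d. \<Sum>a\<in>A. f a $$ (i,k) * M $$ (k,j))"
    using i by (simp add: msum_entry sum_distrib_right)
  also have "\<dots> = (\<Sum>a\<in>A. \<Sum>k<d. f a $$ (i,k) * M $$ (k,j))" by (rule sum.swap)
  also have "\<dots> = (\<Sum>a\<in>A. (f a * M) $$ (i,j))"
    by (rule sum.cong[OF refl]) (rule mult_entry[OF f M i j, symmetric])
  also have "\<dots> = msum d (\<lambda>a. f a * M) A $$ (i,j)" using i j by (simp add: msum_entry)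
  finally show "(msum d f A * M) $$ (i,j) = msum d (\<lambda>a. f a * M) A $$ (i,j)" .
qed (use M in auto)

lemma msum_mult_left: assumes f: "\<And>a. a \<in> A \<Longrightarrow> f a \<in> carrier_mat d d" and M: "M \<in> carrier_mat d d"
  shows "M * msum d f A = msum d (\<lambda>a. M * f a) A"
proof (rule eq_matI)
  fix i j assume "i < dim_row (msum d (\<lambda>a. M * f a) A)" "j < dim_col (msum d (\<lambda>a. M * f a) A)"
  then have i: "i < d" and j: "j < d" by auto
  have "(M * msum d f A) $$ (i,j) = (\<Sum>k<d. M $$ (i,k) * msum d f A $$ (k,j))"
    by (rule mult_entry[OF M msum_carrier i j])
  also have "\<dots> = (\<Sum>k<d. \<Sum>a\<in>A. M $$ (i,k) * f a $$ (k,j))"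
    using j by (simp add: msum_entry sum_distrib_left)
  also have "\<dots> = (\<Sum>a\<in>A. \<Sum>k<d. M $$ (i,k) * f a $$ (k,j))" by (rule sum.swap)
  also have "\<dots> = (\<Sum>a\<in>A. (M * f a) $$ (i,j))"
    by (rule sum.cong[OF refl]) (rule mult_entry[OF M f i j, symmetric])
  also have "\<dots> = msum d (\<lambda>a. M * f a) A $$ (i,j)" using i j by (simp add: msum_entry)
  finally show "(M * msum d f A) $$ (i,j) = msum d (\<lambda>a. M * f a) A $$ (i,j)" .
qed (use M in auto)

lemma msum_trace: assumes f: "\<And>a. a \<in> A \<Longrightarrow> f a \<in> carrier_mat d d"
  shows "mat_trace (msum d f A) = (\<Sum>a\<in>A. mat_trace (f a))"
proof -
  have "mat_trace (msum d f A) = (\<Sum>i<d. \<Sum>a\<in>A. f a $$ (i,i))"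
    unfolding mat_trace_def by (rule sum.cong) (simp_all add: msum_entry)
  also have "\<dots> = (\<Sum>a\<in>A. \<Sum>i<d. f a $$ (i,i))" by (rule sum.swap)
  also have "\<dots> = (\<Sum>a\<in>A. mat_trace (f a))"
    unfolding mat_trace_def by (rule sum.cong[OF refl]) (use f in auto)
  finally show ?thesis .
qed

lemma msum_adj: assumes f: "\<And>a. a \<in> A \<Longrightarrow> f a \<in> carrier_mat d d"
  shows "mat_adjoint (msum d f A) = msum d (\<lambda>a. mat_adjoint (f a)) A"
proof (rule eq_matI)
  fix i j assume "i < dim_row (msum d (\<lambda>a. mat_adjoint (f a)) A)" "j < dim_col (msum d (\<lambda>a. mat_adjoint (f a)) A)"
  then have i: "i < d" and j: "j < d" by auto
  have "mat_adjoint (msum d f A) $$ (i,j) = cnj (\<Sum>a\<in>A. f a $$ (j,i))"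
    using i j by (simp add: msum_entry)
  also have "\<dots> = (\<Sum>a\<in>A. cnj (f a $$ (j,i)))" by simp
  also have "\<dots> = (\<Sum>a\<in>A. mat_adjoint (f a) $$ (i,j))"
  proof (rule sum.cong[OF refl])
    fix a assume "a \<in> A" then have "f a \<in> carrier_mat d d" by (rule f)
    then show "cnj (f a $$ (j,i)) = mat_adjoint (f a) $$ (i,j)" using i j by simp
  qed
  finally show "mat_adjoint (msum d f A) $$ (i,j) = msum d (\<lambda>a. mat_adjoint (f a)) A $$ (i,j)"
    using i j by (simp add: msum_entry)
qed auto

lemma msum_smult: assumes f: "\<And>a. a \<in> A \<Longrightarrow> f a \<in> carrier_mat d d"
  shows "c \<cdot>\<^sub>m msum d f A = msum d (\<lambda>a. c \<cdot>\<^sub>m f a) A"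
proof (rule eq_matI)
  fix i j assume "i < dim_row (msum d (\<lambda>a. c \<cdot>\<^sub>m f a) A)" "j < dim_col (msum d (\<lambda>a. c \<cdot>\<^sub>m f a) A)"
  then have i: "i < d" and j: "j < d" by auto
  have "(c \<cdot>\<^sub>m msum d f A) $$ (i,j) = (\<Sum>a\<in>A. c * f a $$ (i,j))"
    using i j by (simp add: msum_entry sum_distrib_left)
  also have "\<dots> = (\<Sum>a\<in>A. (c \<cdot>\<^sub>m f a) $$ (i,j))"
  proof (rule sum.cong[OF refl])
    fix a assume "a \<in> A" then have "f a \<in> carrier_mat d d" by (rule f)
    then show "c * f a $$ (i,j) = (c \<cdot>\<^sub>m f a) $$ (i,j)" using i j by simp
  qed
  finally show "(c \<cdot>\<^sub>m msum d f A) $$ (i,j) = msum d (\<lambda>a. c \<cdot>\<^sub>m f a) A $$ (i,j)"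
    using i j by (simp add: msum_entry)
qed auto

lemma smult_prod: assumes "A \<in> carrier_mat n n" "B \<in> carrier_mat n n"
  shows "(a \<cdot>\<^sub>m A) * (b \<cdot>\<^sub>m B) = (a * b) \<cdot>\<^sub>m (A * B :: complex mat)"
proof -
  have "(a \<cdot>\<^sub>m A) * (b \<cdot>\<^sub>m B) = a \<cdot>\<^sub>m (A * (b \<cdot>\<^sub>m B))"
    using assms by (intro mult_smult_assoc_mat) auto
  also have "A * (b \<cdot>\<^sub>m B) = b \<cdot>\<^sub>m (A * B)" using assms by (intro mult_smult_distrib) auto
  finally show ?thesis by (simp add: smult_smult_mat)
qed

lemma msum_cong: "(\<And>a. a \<in> A \<Longrightarrow> f a = g a) \<Longrightarrow> msum d f A = msum d g A"
  unfolding msum_def by (rule cong[OF refl]) (auto intro!: sum.cong)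

definition wh :: "nat \<Rightarrow> (int \<times> int \<Rightarrow> complex) \<Rightarrow> (int \<times> int) set \<Rightarrow> complex mat" where
  "wh d a S = msum d (\<lambda>q. a q \<cdot>\<^sub>m displ d q) S"

lemma wh_carrier[simp]: "wh d a S \<in> carrier_mat d d" by (simp add: wh_def)

lemma wh_trace: assumes "S \<subseteq> Zd2star d" shows "mat_trace (wh d a S) = 0"
proof -
  have "mat_trace (wh d a S) = (\<Sum>q\<in>S. mat_trace (a q \<cdot>\<^sub>m displ d q))"
    unfolding wh_def by (rule msum_trace) simp
  also have "\<dots> = (\<Sum>q\<in>S. a q * mat_trace (displ d q))"
    by (rule sum.cong[OF refl]) (rule trace_smult[OF displ_carrier])
  also have "\<dots> = 0" using assms trace_displ by (auto intro!: sum.neutral)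
  finally show ?thesis .
qed

lemma wh_adj: "mat_adjoint (wh d a S) = msum d (\<lambda>q. cnj (a q) \<cdot>\<^sub>m mat_adjoint (displ d q)) S"
  unfolding wh_def by (subst msum_adj) (auto simp: adj_smult)

lemma wh_trace_adj_prod: assumes S: "S \<subseteq> Zd2 d" and fin: "finite S"
  shows "mat_trace (mat_adjoint (wh d a S) * wh d b S) = of_nat d * (\<Sum>q\<in>S. cnj (a q) * b q)"
proof -
  let ?F = "\<lambda>p. cnj (a p) \<cdot>\<^sub>m mat_adjoint (displ d p)"
  let ?G = "\<lambda>q. b q \<cdot>\<^sub>m displ d q"
  have "mat_adjoint (wh d a S) * wh d b S = msum d (\<lambda>p. ?F p * wh d b S) S"
    unfolding wh_adj by (rule msum_mult_right) auto
  also have "\<dots> = msum d (\<lambda>p. msum d (\<lambda>q. ?F p * ?G q) S) S"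
    unfolding wh_def by (rule msum_cong, rule msum_mult_left) auto
  finally have e: "mat_adjoint (wh d a S) * wh d b S = msum d (\<lambda>p. msum d (\<lambda>q. ?F p * ?G q) S) S" .
  have t: "mat_trace (?F p * ?G q) = cnj (a p) * b q * (if p = q then of_nat d else 0)" if "p \<in> S" "q \<in> S" for p q
  proof -
    have "?F p * ?G q = (cnj (a p) * b q) \<cdot>\<^sub>m (mat_adjoint (displ d p) * displ d q)"
      by (rule smult_prod) auto
    then have "mat_trace (?F p * ?G q) = (cnj (a p) * b q) * mat_trace (mat_adjoint (displ d p) * displ d q)"
      using trace_smult[OF mult_carrier_mat[OF adj_carrier[OF displ_carrier] displ_carrier]] by simp
    also have "mat_trace (mat_adjoint (displ d p) * displ d q) = mat_trace (displ d q * mat_adjoint (displ d p))"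
      by (rule trace_comm) auto
    also have "\<dots> = (if q = p then of_nat d else 0)" using that S by (intro trace_orth) auto
    finally show ?thesis by auto
  qed
  have "mat_trace (mat_adjoint (wh d a S) * wh d b S) = (\<Sum>p\<in>S. mat_trace (msum d (\<lambda>q. ?F p * ?G q) S))"
    unfolding e by (rule msum_trace) simp
  also have "\<dots> = (\<Sum>p\<in>S. \<Sum>q\<in>S. mat_trace (?F p * ?G q))"
    by (rule sum.cong[OF refl], rule msum_trace) (auto intro!: mult_carrier_mat)
  also have "\<dots> = (\<Sum>p\<in>S. \<Sum>q\<in>S. cnj (a p) * b q * (if p = q then of_nat d else 0))"
    by (intro sum.cong refl t)
  also have "\<dots> = (\<Sum>p\<in>S. cnj (a p) * b p * of_nat d)"
    by (rule sum.cong[OF refl]) (simp add: fin if_distrib[of "\<lambda>x. _ * x"] sum.delta cong: if_cong)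
  finally show ?thesis by (simp add: sum_distrib_left mult_ac)
qed

lemma wh_conj: assumes d: "d > 0" and fin: "finite S"
  shows "displ d r * wh d a S * mat_adjoint (displ d r) = wh d (\<lambda>q. a q * tau d powi (2 * symp q (- fst r, - snd r))) S"
proof -
  have "displ d r * wh d a S = msum d (\<lambda>q. displ d r * (a q \<cdot>\<^sub>m displ d q)) S"
    unfolding wh_def by (rule msum_mult_left) auto
  then have "displ d r * wh d a S * mat_adjoint (displ d r)
      = msum d (\<lambda>q. displ d r * (a q \<cdot>\<^sub>m displ d q) * mat_adjoint (displ d r)) S"
    by (simp, intro msum_mult_right) auto
  also have "\<dots> = wh d (\<lambda>q. a q * tau d powi (2 * symp q (- fst r, - snd r))) S"
    unfolding wh_def
  proof (rule msum_cong)
    fix q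
    have "displ d r * (a q \<cdot>\<^sub>m displ d q) * mat_adjoint (displ d r)
        = a q \<cdot>\<^sub>m (displ d r * displ d q * mat_adjoint (displ d r))"
      by (simp only: mult_smult_distrib[OF displ_carrier displ_carrier]
         mult_smult_assoc_mat[OF mult_carrier_mat[OF displ_carrier displ_carrier] adj_carrier[OF displ_carrier]])
    also have "\<dots> = (a q * tau d powi (2 * symp q (- fst r, - snd r))) \<cdot>\<^sub>m displ d q"
      by (simp add: displ_conj2[OF d] smult_smult_mat)
    finally show "displ d r * (a q \<cdot>\<^sub>m displ d q) * mat_adjoint (displ d r)
        = (a q * tau d powi (2 * symp q (- fst r, - snd r))) \<cdot>\<^sub>m displ d q" .
  qed
  finally show ?thesis .
qed

lemma cs_real: fixes x y :: "'i \<Rightarrow> real" assumes K: "finite K"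
  shows "(\<Sum>k\<in>K. x k * y k)^2 \<le> (\<Sum>k\<in>K. (x k)^2) * (\<Sum>k\<in>K. (y k)^2)"
proof -
  have "0 \<le> (\<Sum>i\<in>K. \<Sum>j\<in>K. (x i * y j - x j * y i)^2)" by (intro sum_nonneg) simp
  also have "\<dots> = (\<Sum>i\<in>K. \<Sum>j\<in>K. (x i)^2 * (y j)^2) + (\<Sum>i\<in>K. \<Sum>j\<in>K. (x j)^2 * (y i)^2)
       - 2 * (\<Sum>i\<in>K. \<Sum>j\<in>K. (x i * y i) * (x j * y j))"
    by (simp add: sum_subtractf sum.distrib sum_distrib_left power2_eq_square algebra_simps)
  also have "(\<Sum>i\<in>K. \<Sum>j\<in>K. (x j)^2 * (y i)^2) = (\<Sum>i\<in>K. \<Sum>j\<in>K. (x i)^2 * (y j)^2)"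
    by (subst sum.swap) simp
  also have "(\<Sum>i\<in>K. \<Sum>j\<in>K. (x i)^2 * (y j)^2) = (\<Sum>k\<in>K. (x k)^2) * (\<Sum>k\<in>K. (y k)^2)"
    by (simp add: sum_product)
  also have "(\<Sum>i\<in>K. \<Sum>j\<in>K. (x i * y i) * (x j * y j)) = (\<Sum>k\<in>K. x k * y k)^2"
    by (simp add: sum_product power2_eq_square)
  finally show ?thesis by simp
qed

lemma cs_complex: fixes a b :: "'i \<Rightarrow> complex" assumes K: "finite K"
  shows "(cmod (\<Sum>k\<in>K. a k * b k))^2 \<le> (\<Sum>k\<in>K. (cmod (a k))^2) * (\<Sum>k\<in>K. (cmod (b k))^2)"
proof -
  have "cmod (\<Sum>k\<in>K. a k * b k) \<le> (\<Sum>k\<in>K. cmod (a k * b k))" by (rule norm_sum)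
  then have "cmod (\<Sum>k\<in>K. a k * b k) \<le> (\<Sum>k\<in>K. cmod (a k) * cmod (b k))" by (simp add: norm_mult)
  then have "(cmod (\<Sum>k\<in>K. a k * b k))^2 \<le> (\<Sum>k\<in>K. cmod (a k) * cmod (b k))^2"
    by (intro power_mono) auto
  also have "\<dots> \<le> (\<Sum>k\<in>K. (cmod (a k))^2) * (\<Sum>k\<in>K. (cmod (b k))^2)" by (rule cs_real[OF K])
  finally show ?thesis .
qed

definition fro :: "nat \<Rightarrow> complex mat \<Rightarrow> real" where
  "fro n A = (\<Sum>i<n. \<Sum>k<n. (cmod (A $$ (i,k)))^2)"

lemma fro_nonneg: "0 \<le> fro n A" unfolding fro_def by (intro sum_nonneg) auto

lemma trace_adj_mult: assumes A: "A \<in> carrier_mat n n"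
  shows "mat_trace (mat_adjoint A * A) = complex_of_real (fro n A)"
proof -
  have "mat_trace (mat_adjoint A * A) = (\<Sum>i<n. \<Sum>k<n. cnj (A $$ (k,i)) * A $$ (k,i))"
    unfolding mat_trace_def using A by (intro sum.cong) (auto simp: mult_entry[of _ n] simp del: index_mult_mat(1))
  also have "\<dots> = (\<Sum>i<n. \<Sum>k<n. complex_of_real ((cmod (A $$ (k,i)))^2))"
    by (intro sum.cong refl) (subst complex_norm_square, simp add: mult.commute)
  also have "\<dots> = complex_of_real (\<Sum>k<n. \<Sum>i<n. (cmod (A $$ (i,k)))^2)" by simp
  also have "(\<Sum>k<n. \<Sum>i<n. (cmod (A $$ (i,k)))^2) = fro n A" unfolding fro_def by (rule sum.swap)
  finally show ?thesis .
qed

lemma fro_zero: assumes A: "A \<in> carrier_mat n n" and z: "fro n A = 0" shows "A = 0\<^sub>m n n"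
proof (rule eq_matI)
  fix i j assume "i < dim_row (0\<^sub>m n n :: complex mat)" "j < dim_col (0\<^sub>m n n :: complex mat)"
  then have i: "i < n" and j: "j < n" by auto
  have "\<forall>i\<in>{..<n}. (\<Sum>k<n. (cmod (A $$ (i,k)))^2) = 0"
    using z unfolding fro_def by (subst sum_nonneg_eq_0_iff[symmetric]) (auto intro: sum_nonneg)
  then have "(\<Sum>k<n. (cmod (A $$ (i,k)))^2) = 0" using i by auto
  then have "\<forall>k\<in>{..<n}. (cmod (A $$ (i,k)))^2 = 0" by (subst sum_nonneg_eq_0_iff[symmetric]) auto
  then show "A $$ (i,j) = 0\<^sub>m n n $$ (i,j)" using i j by auto
qed (use A in auto)

lemma fro_mult: assumes A: "A \<in> carrier_mat n n" and B: "B \<in> carrier_mat n n"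
  shows "fro n (A * B) \<le> fro n A * fro n B"
proof -
  have "fro n (A * B) = (\<Sum>i<n. \<Sum>j<n. (cmod (\<Sum>k<n. A $$ (i,k) * B $$ (k,j)))^2)"
    unfolding fro_def using A B by (intro sum.cong refl) (simp add: mult_entry[of _ n] del: index_mult_mat(1))
  also have "\<dots> \<le> (\<Sum>i<n. \<Sum>j<n. (\<Sum>k<n. (cmod (A $$ (i,k)))^2) * (\<Sum>k<n. (cmod (B $$ (k,j)))^2))"
    by (intro sum_mono cs_complex) auto
  also have "\<dots> = (\<Sum>i<n. \<Sum>k<n. (cmod (A $$ (i,k)))^2) * (\<Sum>j<n. \<Sum>k<n. (cmod (B $$ (k,j)))^2)"
    by (simp add: sum_product)
  also have "(\<Sum>j<n. \<Sum>k<n. (cmod (B $$ (k,j)))^2) = fro n B" unfolding fro_def by (rule sum.swap)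
  finally show ?thesis by (simp add: fro_def)
qed

lemma trace_sq_add: fixes A B :: "complex mat" assumes A: "A \<in> carrier_mat n n" and B: "B \<in> carrier_mat n n"
  shows "mat_trace ((A + B) * (A + B)) = mat_trace (A * A) + 2 * mat_trace (A * B) + mat_trace (B * B)"
proof -
  have "(A + B) * (A + B) = (A * A + B * A) + (A * B + B * B)"
    using A B by (simp add: add_mult_distrib_mat[of _ n n] mult_add_distrib_mat[of _ n n])
  then have "mat_trace ((A + B) * (A + B)) = (mat_trace (A * A) + mat_trace (B * A)) + (mat_trace (A * B) + mat_trace (B * B))"
    using A B by (simp add: trace_add[of _ n])
  also have "mat_trace (B * A) = mat_trace (A * B)" by (rule trace_comm[OF B A])
  finally show ?thesis by simp
qed

lemma herm_ineq: fixes X :: "complex mat" and D :: real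
  assumes X: "X \<in> carrier_mat n n" and H: "mat_adjoint X = X" and D: "D > 0"
    and T2: "mat_trace (X * X) = complex_of_real (D^2)"
  shows "Re (mat_trace (X * X * X)) \<le> D^3"
    and "Re (mat_trace (X * X * X)) = D^3 \<Longrightarrow> X * X = complex_of_real D \<cdot>\<^sub>m X"
proof -
  let ?c = "- complex_of_real D"
  define Y where "Y = X * X + ?c \<cdot>\<^sub>m X"
  have XX: "X * X \<in> carrier_mat n n" using X by simp
  have cX: "?c \<cdot>\<^sub>m X \<in> carrier_mat n n" using X by simp
  have Y: "Y \<in> carrier_mat n n" using X by (simp add: Y_def)
  have HY: "mat_adjoint Y = Y"
    unfolding Y_def using X H by (simp add: adj_add[of _ n] adj_mult[of _ n] adj_smult)
  have "complex_of_real (fro n X) = mat_trace (X * X)" using trace_adj_mult[OF X] H by simp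
  then have "complex_of_real (fro n X) = complex_of_real (D^2)" by (rule trans[OF _ T2])
  then have fX: "fro n X = D^2" by (simp only: of_real_eq_iff)
  have f4: "fro n (X * X) \<le> D^4"
    using fro_mult[OF X X] fX by (simp add: power2_eq_square power4_eq_xxxx)
  have t4: "mat_trace (X * X * (X * X)) = complex_of_real (fro n (X * X))"
    using trace_adj_mult[OF XX] X H by (simp add: adj_mult[of _ n])
  have "mat_trace (Y * Y) = mat_trace (X * X * (X * X)) + 2 * mat_trace (X * X * (?c \<cdot>\<^sub>m X))
       + mat_trace ((?c \<cdot>\<^sub>m X) * (?c \<cdot>\<^sub>m X))"
    unfolding Y_def by (rule trace_sq_add[OF XX cX])
  also have "X * X * (?c \<cdot>\<^sub>m X) = ?c \<cdot>\<^sub>m (X * X * X)" using X by (simp add: mult_smult_distrib[of _ n n])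
  also have "(?c \<cdot>\<^sub>m X) * (?c \<cdot>\<^sub>m X) = (?c * ?c) \<cdot>\<^sub>m (X * X)" by (rule smult_prod[OF X X])
  finally have tY: "mat_trace (Y * Y) = complex_of_real (fro n (X * X)) + 2 * ?c * mat_trace (X * X * X)
       + ?c * ?c * complex_of_real (D^2)"
    using X t4 T2 by (simp add: trace_smult[of _ n])
  have fY: "mat_trace (Y * Y) = complex_of_real (fro n Y)"
    using trace_adj_mult[OF Y] HY by simp
  have eqR: "fro n Y = fro n (X * X) - 2 * D * Re (mat_trace (X * X * X)) + D^4"
  proof -
    have "complex_of_real (fro n Y) = complex_of_real (fro n (X * X)) + 2 * ?c * mat_trace (X * X * X)
       + ?c * ?c * complex_of_real (D^2)" using tY fY by simp
    then have "Re (complex_of_real (fro n Y)) = Re (complex_of_real (fro n (X * X)) + 2 * ?c * mat_trace (X * X * X)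
       + ?c * ?c * complex_of_real (D^2))" by simp
    then show ?thesis by (simp add: power2_eq_square power4_eq_xxxx)
  qed
  have "0 \<le> fro n Y" by (rule fro_nonneg)
  then have "2 * D * Re (mat_trace (X * X * X)) \<le> 2 * D^4" using eqR f4 by simp
  then have "D * Re (mat_trace (X * X * X)) \<le> D * D^3" by (simp add: power4_eq_xxxx power3_eq_cube)
  then show "Re (mat_trace (X * X * X)) \<le> D^3" using D by simp
  assume eq: "Re (mat_trace (X * X * X)) = D^3"
  have "fro n Y \<le> 0" using eqR f4 eq by (simp add: power4_eq_xxxx power3_eq_cube)
  then have "fro n Y = 0" using fro_nonneg[of n Y] by simp
  then have "Y = 0\<^sub>m n n" by (rule fro_zero[OF Y])
  then have "X * X + ?c \<cdot>\<^sub>m X + complex_of_real D \<cdot>\<^sub>m X = 0\<^sub>m n n + complex_of_real D \<cdot>\<^sub>m X"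
    by (simp add: Y_def)
  moreover have "X * X + ?c \<cdot>\<^sub>m X + complex_of_real D \<cdot>\<^sub>m X = X * X"
    by (rule eq_matI) (use X in auto)
  moreover have "0\<^sub>m n n + complex_of_real D \<cdot>\<^sub>m X = complex_of_real D \<cdot>\<^sub>m X"
    by (rule eq_matI) (use X in auto)
  ultimately show "X * X = complex_of_real D \<cdot>\<^sub>m X" by simp
qed

lemma rank_one_lemma: fixes P :: "complex mat"
  assumes P: "P \<in> carrier_mat n n" and idem: "P * P = P" and H: "mat_adjoint P = P" and tr: "mat_trace P = 1"
  shows "vec_space.rank n P = 1"
proof -
  have gram: "(\<Sum>r<n. cnj (P $$ (r,a)) * P $$ (r,b)) = P $$ (a,b)" if "a < n" "b < n" for a b
  proof -
    have "(mat_adjoint P * P) $$ (a,b) = (\<Sum>r<n. cnj (P $$ (r,a)) * P $$ (r,b))"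
      using P that by (simp add: mult_entry[of _ n] del: index_mult_mat(1))
    then show ?thesis using H idem by simp
  qed
  define p where "p a = (\<Sum>r<n. (cmod (P $$ (r,a)))^2)" for a
  have p0: "0 \<le> p a" for a unfolding p_def by (intro sum_nonneg) auto
  have Pd: "P $$ (a,a) = complex_of_real (p a)" if "a < n" for a
  proof -
    have "P $$ (a,a) = (\<Sum>r<n. cnj (P $$ (r,a)) * P $$ (r,a))" using gram[OF that that] by simp
    also have "\<dots> = (\<Sum>r<n. complex_of_real ((cmod (P $$ (r,a)))^2))"
      by (intro sum.cong refl) (subst complex_norm_square, simp add: mult.commute)
    finally show ?thesis by (simp add: p_def)
  qed
  have sp: "(\<Sum>a<n. p a) = 1"
  proof -
    have "complex_of_real (\<Sum>a<n. p a) = (\<Sum>a<n. P $$ (a,a))" by (simp add: Pd)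
    also have "\<dots> = 1" using tr P by (simp add: mat_trace_def)
    finally show ?thesis by (metis of_real_eq_1_iff)
  qed
  have cs: "(cmod (P $$ (k,c)))^2 \<le> p k * p c" if "k < n" "c < n" for k c
  proof -
    have "(cmod (P $$ (k,c)))^2 = (cmod (\<Sum>r<n. cnj (P $$ (r,k)) * P $$ (r,c)))^2" using gram[OF that] by simp
    also have "\<dots> \<le> (\<Sum>r<n. (cmod (cnj (P $$ (r,k))))^2) * (\<Sum>r<n. (cmod (P $$ (r,c)))^2)"
      by (rule cs_complex) simp
    finally show ?thesis by (simp add: p_def)
  qed
  have sq: "(\<Sum>k<n. \<Sum>c<n. (cmod (P $$ (k,c)))^2) = 1"
  proof -
    have "(\<Sum>k<n. \<Sum>c<n. (cmod (P $$ (k,c)))^2) = (\<Sum>c<n. p c)" unfolding p_def by (rule sum.swap)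
    then show ?thesis using sp by simp
  qed
  have eqcs: "(cmod (P $$ (k,c)))^2 = p k * p c" if "k < n" "c < n" for k c
  proof -
    have "(\<Sum>k<n. \<Sum>c<n. p k * p c - (cmod (P $$ (k,c)))^2) = (\<Sum>k<n. p k) * (\<Sum>c<n. p c) - 1"
      using sq by (simp add: sum_subtractf sum_product)
    then have z: "(\<Sum>k<n. \<Sum>c<n. p k * p c - (cmod (P $$ (k,c)))^2) = 0" using sp by simp
    have nn: "\<forall>k\<in>{..<n}. 0 \<le> (\<Sum>c<n. p k * p c - (cmod (P $$ (k,c)))^2)"
      using cs by (auto intro!: sum_nonneg)
    have "\<forall>k\<in>{..<n}. (\<Sum>c<n. p k * p c - (cmod (P $$ (k,c)))^2) = 0"
      using nn z sum_nonneg_eq_0_iff[of "{..<n}" "\<lambda>k. \<Sum>c<n. p k * p c - (cmod (P $$ (k,c)))^2"] by simp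
    then have "(\<Sum>c<n. p k * p c - (cmod (P $$ (k,c)))^2) = 0" using that by simp
    moreover have "\<forall>c\<in>{..<n}. 0 \<le> p k * p c - (cmod (P $$ (k,c)))^2" using cs that by auto
    ultimately have "\<forall>c\<in>{..<n}. p k * p c - (cmod (P $$ (k,c)))^2 = 0"
      using sum_nonneg_eq_0_iff[of "{..<n}" "\<lambda>c. p k * p c - (cmod (P $$ (k,c)))^2"] by simp
    then have "p k * p c - (cmod (P $$ (k,c)))^2 = 0" using that by simp
    then show ?thesis by simp
  qed
  obtain k where k: "k < n" "p k \<noteq> 0"
  proof -
    have "\<exists>k<n. p k \<noteq> 0"
    proof (rule ccontr)
      assume "\<not> (\<exists>k<n. p k \<noteq> 0)"
      then have "(\<Sum>a<n. p a) = 0" by simp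
      then show False using sp by simp
    qed
    then show ?thesis using that by blast
  qed
  have pk: "p k > 0" using p0[of k] k by simp
  let ?a = "P $$ (k,k)"
  have akk: "?a = complex_of_real (p k)" using Pd[OF k(1)] .
  have col: "P $$ (r,c) = P $$ (r,k) * (P $$ (k,c) / ?a)" if r: "r < n" and c: "c < n" for r c
  proof -
    let ?b = "P $$ (k,c)"
    define w where "w r = P $$ (r,c) * ?a - P $$ (r,k) * ?b" for r
    have g1: "(\<Sum>r<n. P $$ (r,c) * cnj (P $$ (r,c))) = complex_of_real (p c)"
      using Pd[OF c] gram[OF c c] by (simp add: mult.commute)
    have g2: "(\<Sum>r<n. P $$ (r,c) * cnj (P $$ (r,k))) = ?b"
      using gram[OF k(1) c] by (simp add: mult.commute)
    have g3: "(\<Sum>r<n. P $$ (r,k) * cnj (P $$ (r,c))) = cnj ?b"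
    proof -
      have "(\<Sum>r<n. P $$ (r,k) * cnj (P $$ (r,c))) = cnj (\<Sum>r<n. cnj (P $$ (r,k)) * P $$ (r,c))" by simp
      then show ?thesis using gram[OF k(1) c] by simp
    qed
    have g4: "(\<Sum>r<n. P $$ (r,k) * cnj (P $$ (r,k))) = complex_of_real (p k)"
      using Pd[OF k(1)] gram[OF k(1) k(1)] by (simp add: mult.commute)
    have bb: "?b * cnj ?b = complex_of_real (p k * p c)"
      using eqcs[OF k(1) c] by (subst complex_norm_square[symmetric]) simp
    have "(\<Sum>r<n. w r * cnj (w r)) =
       ?a * cnj ?a * (\<Sum>r<n. P $$ (r,c) * cnj (P $$ (r,c)))
       - ?a * cnj ?b * (\<Sum>r<n. P $$ (r,c) * cnj (P $$ (r,k)))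
       - cnj ?a * ?b * (\<Sum>r<n. P $$ (r,k) * cnj (P $$ (r,c)))
       + ?b * cnj ?b * (\<Sum>r<n. P $$ (r,k) * cnj (P $$ (r,k)))"
      unfolding w_def by (simp add: sum_distrib_left sum_subtractf sum.distrib algebra_simps)
    also have "\<dots> = 0"
      unfolding g1 g2 g3 g4 akk by (simp add: bb algebra_simps)
    finally have "(\<Sum>r<n. w r * cnj (w r)) = 0" .
    moreover have "(\<Sum>r<n. w r * cnj (w r)) = (\<Sum>r<n. complex_of_real ((cmod (w r))^2))"
      by (intro sum.cong refl) (rule complex_norm_square[symmetric])
    ultimately have "complex_of_real (\<Sum>r<n. (cmod (w r))^2) = 0"
      by (simp only: of_real_sum)
    then have "(\<Sum>r<n. (cmod (w r))^2) = 0" by (simp only: of_real_eq_0_iff)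
    then have "\<forall>r\<in>{..<n}. (cmod (w r))^2 = 0" by (subst sum_nonneg_eq_0_iff[symmetric]) auto
    then have "w r = 0" using r by auto
    then have "P $$ (r,c) * ?a = P $$ (r,k) * ?b" unfolding w_def by simp
    moreover have "?a \<noteq> 0" using akk pk by simp
    ultimately show ?thesis by (simp add: field_simps)
  qed
  have le1: "vec_space.rank n P \<le> 1"
    by (rule vec_space.rank_le_1_product_entries[OF P, of "\<lambda>r. P $$ (r,k)" "\<lambda>c. P $$ (k,c) / ?a"])
       (use P col in auto)
  have ge1: "1 \<le> vec_space.rank n P"
  proof -
    have dr: "dim_row P = n" "dim_col P = n" using P by auto
    have s1: "{i. i < n \<and> i \<in> {k}} = {k}" using k(1) by blast
    have cr: "card {i. i < dim_row P \<and> i \<in> {k}} = 1" "card {j. j < dim_col P \<and> j \<in> {k}} = 1"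
      unfolding dr s1 by simp_all
    have pk0: "pick {k} 0 = k" by (simp, rule Least_equality, auto)
    have "dim_row (submatrix P {k} {k}) = 1" "dim_col (submatrix P {k} {k}) = 1"
      by (simp_all only: dim_submatrix cr)
    then have sub: "submatrix P {k} {k} \<in> carrier_mat 1 1" by (rule carrier_matI)
    have "det (submatrix P {k} {k}) = submatrix P {k} {k} $$ (0,0)" by (rule det_single[OF sub])
    also have "\<dots> = P $$ (pick {k} 0, pick {k} 0)" by (rule submatrix_index) (simp_all only: cr)
    also have "\<dots> = P $$ (k,k)" unfolding pk0 ..
    finally have "det (submatrix P {k} {k}) \<noteq> 0" using akk pk by simp
    from vec_space.rank_gt_minor[OF P this] have "card {j. j < n \<and> j \<in> {k}} \<le> vec_space.rank n P" .
    then show ?thesis unfolding s1 by simp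
  qed
  show ?thesis using le1 ge1 by simp
qed

definition ee :: "(int \<times> int \<Rightarrow> real) \<Rightarrow> int \<times> int \<Rightarrow> complex" where
  "ee theta q = exp (\<i> * complex_of_real (theta q))"

definition cc :: "nat \<Rightarrow> complex" where
  "cc d = complex_of_real (1 / sqrt (real d + 1))"

lemma ee_cis: "ee theta q = cis (theta q)" by (simp add: ee_def cis_conv_exp)

lemma ee_cnj: "cnj (ee theta q) = exp (- \<i> * complex_of_real (theta q))"
proof -
  have "cnj (ee theta q) = cis (- theta q)" by (simp add: ee_cis cis_cnj)
  also have "\<dots> = exp (- \<i> * complex_of_real (theta q))" by (simp add: cis_conv_exp)
  finally show ?thesis .
qed

lemma ee_norm: "cnj (ee theta q) * ee theta q = 1"
  by (simp add: ee_cis cis_cnj cis_mult)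

lemma cc_cnj: "cnj (cc d) = cc d" by (simp add: cc_def)

lemma cc_sq: "cc d * cc d = complex_of_real (1 / (real d + 1))"
proof -
  have "sqrt (real d + 1) * sqrt (real d + 1) = real d + 1" by simp
  then show ?thesis unfolding cc_def of_real_mult[symmetric] by (simp add: field_simps)
qed

lemma bar_Zs: assumes q: "q \<in> Zd2star d" shows "bar d q \<in> Zd2star d"
proof -
  have d: "d > 0" using q by (auto simp: Zd2star_def Zd2_def)
  have "bar d q \<noteq> (0,0)" using star_not_dvd[OF q] by (auto simp: bar_def red_zero_iff)
  then show ?thesis using red_Zd2[OF d] by (simp add: Zd2star_def bar_def)
qed

lemma bar_bar: assumes q: "q \<in> Zd2 d" shows "bar d (bar d q) = q"
proof -
  have "bar d (bar d q) = red d q"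
    by (simp add: bar_def red_def mod_minus_eq)
  then show ?thesis using red_id[OF q] by simp
qed

lemma bar_inj: "inj_on (bar d) (Zd2star d)"
  by (rule inj_on_inverseI[where g = "bar d"]) (use bar_bar Zd2star_sub in blast)

lemma bar_image: "bar d ` Zd2star d = Zd2star d"
proof
  show "bar d ` Zd2star d \<subseteq> Zd2star d" using bar_Zs by blast
  show "Zd2star d \<subseteq> bar d ` Zd2star d"
  proof
    fix q assume q: "q \<in> Zd2star d"
    then have "q = bar d (bar d q)" using bar_bar Zd2star_sub by (metis subsetD)
    then show "q \<in> bar d ` Zd2star d" using bar_Zs[OF q] by blast
  qed
qed

lemma msum_reindex: "inj_on h A \<Longrightarrow> msum d f (h ` A) = msum d (\<lambda>a. f (h a)) A"
  unfolding msum_def by (simp add: sum.reindex)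

lemma B_wh: "Bop d theta = wh d (\<lambda>q. cc d * ee theta q) (Zd2star d)"
proof -
  have "Bop d theta = msum d (\<lambda>q. cc d \<cdot>\<^sub>m (ee theta q \<cdot>\<^sub>m displ d q)) (Zd2star d)"
    unfolding Bop_def cc_def[symmetric] ee_def[symmetric]
    by (subst msum_smult) (auto simp: cc_def)
  also have "\<dots> = wh d (\<lambda>q. cc d * ee theta q) (Zd2star d)"
    unfolding wh_def by (rule msum_cong) (simp add: smult_smult_mat)
  finally show ?thesis .
qed

lemma B_carrier[simp]: "Bop d theta \<in> carrier_mat d d"
  by (simp add: B_wh)

lemma B_herm: assumes d: "d > 0"
  and sym: "\<forall>q\<in>Zd2star d. exp (\<i> * complex_of_real (theta (bar d q)))
               = sgn_s d (- fst q, - snd q) * exp (- \<i> * complex_of_real (theta q))"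
  shows "mat_adjoint (Bop d theta) = Bop d theta"
proof -
  have "mat_adjoint (Bop d theta) = msum d (\<lambda>q. cnj (cc d * ee theta q) \<cdot>\<^sub>m mat_adjoint (displ d q)) (Zd2star d)"
    unfolding B_wh by (rule wh_adj)
  also have "\<dots> = msum d (\<lambda>q. (cc d * ee theta (bar d q)) \<cdot>\<^sub>m displ d (bar d q)) (Zd2star d)"
  proof (rule msum_cong)
    fix q assume q: "q \<in> Zd2star d"
    have "mat_adjoint (displ d q) = sgn_s d (- fst q, - snd q) \<cdot>\<^sub>m displ d (bar d q)"
      using d by (simp add: displ_adj displ_red[OF d, of "(- fst q, - snd q)"] bar_def)
    moreover have "cnj (cc d * ee theta q) * sgn_s d (- fst q, - snd q) = cc d * ee theta (bar d q)"
    proof -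
      have "ee theta (bar d q) = sgn_s d (- fst q, - snd q) * cnj (ee theta q)"
        unfolding ee_cnj unfolding ee_def using sym q by blast
      then show ?thesis by (simp add: cc_cnj mult_ac)
    qed
    ultimately show "cnj (cc d * ee theta q) \<cdot>\<^sub>m mat_adjoint (displ d q) = (cc d * ee theta (bar d q)) \<cdot>\<^sub>m displ d (bar d q)"
      by (simp add: smult_smult_mat)
  qed
  also have "\<dots> = msum d (\<lambda>q. (cc d * ee theta q) \<cdot>\<^sub>m displ d q) (bar d ` Zd2star d)"
    by (rule msum_reindex[symmetric, OF bar_inj])
  also have "\<dots> = Bop d theta" unfolding bar_image B_wh wh_def ..
  finally show ?thesis .
qed

lemma B_trace: "mat_trace (Bop d theta) = 0"
  unfolding B_wh by (rule wh_trace) simp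

lemma B_sq: assumes d: "d > 0" and H: "mat_adjoint (Bop d theta) = Bop d theta"
  shows "mat_trace (Bop d theta * Bop d theta) = complex_of_real (real d * (real d - 1))"
proof -
  have "mat_trace (Bop d theta * Bop d theta) = mat_trace (mat_adjoint (Bop d theta) * Bop d theta)" using H by simp
  also have "\<dots> = of_nat d * (\<Sum>q\<in>Zd2star d. cnj (cc d * ee theta q) * (cc d * ee theta q))"
    unfolding B_wh by (rule wh_trace_adj_prod) (auto simp: Zd2star_def)
  also have "(\<Sum>q\<in>Zd2star d. cnj (cc d * ee theta q) * (cc d * ee theta q)) = (\<Sum>q\<in>Zd2star d. complex_of_real (1 / (real d + 1)))"
  proof (rule sum.cong[OF refl])
    fix q
    have "cnj (cc d * ee theta q) * (cc d * ee theta q) = (cc d * cc d) * (cnj (ee theta q) * ee theta q)"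
      by (simp add: cc_cnj mult_ac)
    then show "cnj (cc d * ee theta q) * (cc d * ee theta q) = complex_of_real (1 / (real d + 1))"
      by (simp add: ee_norm cc_sq)
  qed
  also have "\<dots> = of_nat (d^2 - 1) * complex_of_real (1 / (real d + 1))" by (simp add: card_Zd2star)
  finally have e: "mat_trace (Bop d theta * Bop d theta) = of_nat d * (of_nat (d^2 - 1) * complex_of_real (1 / (real d + 1)))" .
  have "real (d^2 - 1) = (real d - 1) * (real d + 1)" using d
    by (simp add: of_nat_diff power2_eq_square algebra_simps)
  then have "real d * (real (d^2 - 1) * (1 / (real d + 1))) = real d * (real d - 1)" by simp
  then have "complex_of_real (real d * (real (d^2 - 1) * (1 / (real d + 1)))) = complex_of_real (real d * (real d - 1))"
    by simp
  then show ?thesis unfolding e by simp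
qed

lemma trace_adj: fixes A :: "complex mat" assumes "A \<in> carrier_mat n n"
  shows "mat_trace (mat_adjoint A) = cnj (mat_trace A)"
  using assms by (simp add: mat_trace_def)

lemma wh_triple: assumes S: "S \<subseteq> Zd2 d" and fin: "finite S"
  shows "mat_trace (wh d a S * wh d b S * mat_adjoint (wh d h S))
    = (\<Sum>p\<in>S. \<Sum>q\<in>S. \<Sum>r\<in>S. a p * b q * cnj (h r) * mat_trace (displ d p * displ d q * mat_adjoint (displ d r)))"
proof -
  let ?F = "\<lambda>p. a p \<cdot>\<^sub>m displ d p"
  let ?G = "\<lambda>q. b q \<cdot>\<^sub>m displ d q"
  let ?H = "\<lambda>r. cnj (h r) \<cdot>\<^sub>m mat_adjoint (displ d r)"
  have e1: "wh d a S * wh d b S = msum d (\<lambda>p. msum d (\<lambda>q. ?F p * ?G q) S) S"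
  proof -
    have "wh d a S * wh d b S = msum d (\<lambda>p. ?F p * wh d b S) S"
      unfolding wh_def[of d a] by (rule msum_mult_right) auto
    also have "\<dots> = msum d (\<lambda>p. msum d (\<lambda>q. ?F p * ?G q) S) S"
      unfolding wh_def by (rule msum_cong, rule msum_mult_left) auto
    finally show ?thesis .
  qed
  have e2: "mat_adjoint (wh d h S) = msum d ?H S" by (rule wh_adj)
  have "wh d a S * wh d b S * mat_adjoint (wh d h S)
     = msum d (\<lambda>p. msum d (\<lambda>q. ?F p * ?G q) S * msum d ?H S) S"
    unfolding e1 e2 by (rule msum_mult_right) auto
  also have "\<dots> = msum d (\<lambda>p. msum d (\<lambda>q. ?F p * ?G q * msum d ?H S) S) S"
    by (rule msum_cong, rule msum_mult_right) (auto intro!: mult_carrier_mat)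
  also have "\<dots> = msum d (\<lambda>p. msum d (\<lambda>q. msum d (\<lambda>r. ?F p * ?G q * ?H r) S) S) S"
    by (rule msum_cong, rule msum_cong, rule msum_mult_left) (auto intro!: mult_carrier_mat)
  finally have e3: "wh d a S * wh d b S * mat_adjoint (wh d h S) = msum d (\<lambda>p. msum d (\<lambda>q. msum d (\<lambda>r. ?F p * ?G q * ?H r) S) S) S" .
  have t: "mat_trace (?F p * ?G q * ?H r) = a p * b q * cnj (h r) * mat_trace (displ d p * displ d q * mat_adjoint (displ d r))" for p q r
  proof -
    have "?F p * ?G q = (a p * b q) \<cdot>\<^sub>m (displ d p * displ d q)" by (rule smult_prod) auto
    then have "?F p * ?G q * ?H r = (a p * b q * cnj (h r)) \<cdot>\<^sub>m (displ d p * displ d q * mat_adjoint (displ d r))"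
      by (simp only:) (rule smult_prod, auto intro!: mult_carrier_mat)
    then show ?thesis
      using trace_smult[OF mult_carrier_mat[OF mult_carrier_mat[OF displ_carrier displ_carrier] adj_carrier[OF displ_carrier]]]
      by simp
  qed
  have "mat_trace (wh d a S * wh d b S * mat_adjoint (wh d h S))
      = (\<Sum>p\<in>S. \<Sum>q\<in>S. \<Sum>r\<in>S. mat_trace (?F p * ?G q * ?H r))"
    unfolding e3
    by (subst msum_trace, simp, rule sum.cong[OF refl], subst msum_trace, simp, rule sum.cong[OF refl],
        subst msum_trace, auto intro!: mult_carrier_mat)
  also have "\<dots> = (\<Sum>p\<in>S. \<Sum>q\<in>S. \<Sum>r\<in>S. a p * b q * cnj (h r) * mat_trace (displ d p * displ d q * mat_adjoint (displ d r)))"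
    by (simp only: t)
  finally show ?thesis .
qed

lemma LHS_sum: "(\<Sum>(p,q) \<in> {(p,q). p \<in> Zd2star d \<and> q \<in> Zd2star d \<and> oplus d p q \<in> Zd2star d}. g p q)
   = (\<Sum>p\<in>Zd2star d. \<Sum>q\<in>Zd2star d. if oplus d p q \<in> Zd2star d then g p q else 0)"
proof -
  have "{(p,q). p \<in> Zd2star d \<and> q \<in> Zd2star d \<and> oplus d p q \<in> Zd2star d}
      = {x \<in> Zd2star d \<times> Zd2star d. oplus d (fst x) (snd x) \<in> Zd2star d}" by auto
  then have "(\<Sum>(p,q) \<in> {(p,q). p \<in> Zd2star d \<and> q \<in> Zd2star d \<and> oplus d p q \<in> Zd2star d}. g p q)
     = (\<Sum>x\<in>Zd2star d \<times> Zd2star d. if oplus d (fst x) (snd x) \<in> Zd2star d then (case x of (p,q) \<Rightarrow> g p q) else 0)"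
    by (simp add: sum.inter_filter)
  also have "\<dots> = (\<Sum>x\<in>Zd2star d \<times> Zd2star d. case x of (p,q) \<Rightarrow> if oplus d p q \<in> Zd2star d then g p q else 0)"
    by (intro sum.cong refl) (auto split: prod.splits)
  also have "\<dots> = (\<Sum>p\<in>Zd2star d. \<Sum>q\<in>Zd2star d. if oplus d p q \<in> Zd2star d then g p q else 0)"
    by (simp add: sum.cartesian_product)
  finally show ?thesis .
qed

lemma exp3: "exp (\<i> * complex_of_real (a + b - c)) = cis a * cis b * cnj (cis c)"
proof -
  have "exp (\<i> * complex_of_real (a + b - c)) = cis (a + b - c)" by (simp only: cis_conv_exp)
  also have "\<dots> = cis a * cis b * cis (- c)" by (simp add: cis_mult)
  also have "cis (- c) = cnj (cis c)" by (simp add: cis_cnj)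
  finally show ?thesis .
qed

lemma B_cube: assumes d: "d > 0" and H: "mat_adjoint (Bop d theta) = Bop d theta"
  shows "mat_trace (Bop d theta * Bop d theta * Bop d theta)
   = cc d * cc d * cc d * of_nat d * (\<Sum>(p,q) \<in> {(p,q). p \<in> Zd2star d \<and> q \<in> Zd2star d \<and> oplus d p q \<in> Zd2star d}.
               sgn_s d (fst p + fst q, snd p + snd q) * tau d powi (symp p q)
               * exp (\<i> * complex_of_real (theta p + theta q - theta (oplus d p q))))"
proof -
  let ?Z = "Zd2star d"
  let ?a = "\<lambda>q. cc d * ee theta q"
  let ?g = "\<lambda>p q. sgn_s d (fst p + fst q, snd p + snd q) * tau d powi (symp p q) * exp (\<i> * complex_of_real (theta p + theta q - theta (oplus d p q)))"
  have sub: "?Z \<subseteq> Zd2 d" by (rule Zd2star_sub)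
  have "mat_trace (Bop d theta * Bop d theta * Bop d theta) = mat_trace (Bop d theta * Bop d theta * mat_adjoint (Bop d theta))"
    using H by simp
  also have "\<dots> = (\<Sum>p\<in>?Z. \<Sum>q\<in>?Z. \<Sum>r\<in>?Z. ?a p * ?a q * cnj (?a r) * mat_trace (displ d p * displ d q * mat_adjoint (displ d r)))"
    unfolding B_wh by (rule wh_triple[OF sub]) simp
  also have "\<dots> = (\<Sum>p\<in>?Z. \<Sum>q\<in>?Z. if oplus d p q \<in> ?Z then cc d * cc d * cc d * of_nat d * ?g p q else 0)"
  proof (intro sum.cong refl)
    fix p q assume p: "p \<in> ?Z" and q: "q \<in> ?Z"
    have "(\<Sum>r\<in>?Z. ?a p * ?a q * cnj (?a r) * mat_trace (displ d p * displ d q * mat_adjoint (displ d r)))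
       = (\<Sum>r\<in>?Z. if r = oplus d p q then ?a p * ?a q * cnj (?a r) * (tau d powi (symp p q) * sgn_s d (fst p + fst q, snd p + snd q) * of_nat d) else 0)"
    proof (rule sum.cong[OF refl])
      fix r assume r: "r \<in> ?Z"
      have "mat_trace (displ d p * displ d q * mat_adjoint (displ d r))
         = tau d powi (symp p q) * sgn_s d (fst p + fst q, snd p + snd q) * (if r = oplus d p q then of_nat d else 0)"
        by (rule trace_triple) (use p q r sub in auto)
      then show "?a p * ?a q * cnj (?a r) * mat_trace (displ d p * displ d q * mat_adjoint (displ d r))
         = (if r = oplus d p q then ?a p * ?a q * cnj (?a r) * (tau d powi (symp p q) * sgn_s d (fst p + fst q, snd p + snd q) * of_nat d) else 0)"
        by simp
    qed
    also have "\<dots> = (if oplus d p q \<in> ?Z then ?a p * ?a q * cnj (?a (oplus d p q)) * (tau d powi (symp p q) * sgn_s d (fst p + fst q, snd p + snd q) * of_nat d) else 0)"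
      by (simp add: sum.delta')
    also have "\<dots> = (if oplus d p q \<in> ?Z then cc d * cc d * cc d * of_nat d * ?g p q else 0)"
      by (simp only: exp3) (simp add: ee_cis cc_cnj mult_ac)
    finally show "(\<Sum>r\<in>?Z. ?a p * ?a q * cnj (?a r) * mat_trace (displ d p * displ d q * mat_adjoint (displ d r)))
       = (if oplus d p q \<in> ?Z then cc d * cc d * cc d * of_nat d * ?g p q else 0)" .
  qed
  also have "\<dots> = cc d * cc d * cc d * of_nat d * (\<Sum>p\<in>?Z. \<Sum>q\<in>?Z. if oplus d p q \<in> ?Z then ?g p q else 0)"
    by (simp add: sum_distrib_left if_distrib[of "\<lambda>x. _ * x"] cong: if_cong)
  also have "(\<Sum>p\<in>?Z. \<Sum>q\<in>?Z. if oplus d p q \<in> ?Z then ?g p q else 0) = (\<Sum>(p,q) \<in> {(p,q). p \<in> ?Z \<and> q \<in> ?Z \<and> oplus d p q \<in> ?Z}. ?g p q)"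
    by (rule LHS_sum[symmetric])
  finally show ?thesis .
qed

lemma sq_expand: fixes B :: "complex mat" assumes B: "B \<in> carrier_mat n n"
  shows "(1\<^sub>m n + B) * (1\<^sub>m n + B) = (1\<^sub>m n + B) + (B + B * B)"
proof -
  have "(1\<^sub>m n + B) * (1\<^sub>m n + B) = 1\<^sub>m n * (1\<^sub>m n + B) + B * (1\<^sub>m n + B)"
    using B by (intro add_mult_distrib_mat) auto
  also have "1\<^sub>m n * (1\<^sub>m n + B) = 1\<^sub>m n + B" using B by simp
  also have "B * (1\<^sub>m n + B) = B * 1\<^sub>m n + B * B" using B by (intro mult_add_distrib_mat) auto
  also have "B * 1\<^sub>m n = B" using B by simp
  finally show ?thesis .
qed

lemma tr_sq_expand: fixes B :: "complex mat" assumes B: "B \<in> carrier_mat n n"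
  shows "mat_trace ((1\<^sub>m n + B) * (1\<^sub>m n + B)) = of_nat n + 2 * mat_trace B + mat_trace (B * B)"
proof -
  have "mat_trace ((1\<^sub>m n + B) + (B + B * B)) = (mat_trace (1\<^sub>m n) + mat_trace B) + (mat_trace B + mat_trace (B * B))"
    using B by (simp add: trace_add[of _ n])
  then show ?thesis using sq_expand[OF B] by (simp add: trace_one)
qed

lemma tr_cube_expand: fixes B :: "complex mat" assumes B: "B \<in> carrier_mat n n"
  shows "mat_trace ((1\<^sub>m n + B) * (1\<^sub>m n + B) * (1\<^sub>m n + B))
     = of_nat n + 3 * mat_trace B + 3 * mat_trace (B * B) + mat_trace (B * B * B)"
proof -
  let ?X = "1\<^sub>m n + B"
  have X: "?X \<in> carrier_mat n n" using B by simp
  have BB: "B * B \<in> carrier_mat n n" using B by simp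
  have "?X * ?X * ?X = (?X + (B + B * B)) * ?X" by (simp add: sq_expand[OF B])
  also have "\<dots> = ?X * ?X + (B + B * B) * ?X" using B by (intro add_mult_distrib_mat) auto
  also have "(B + B * B) * ?X = B * ?X + B * B * ?X" using B by (intro add_mult_distrib_mat) auto
  also have "B * ?X = B + B * B"
  proof -
    have "B * ?X = B * 1\<^sub>m n + B * B" by (rule mult_add_distrib_mat) (use B in auto)
    then show ?thesis using B by simp
  qed
  also have "B * B * ?X = B * B + B * B * B"
  proof -
    have "B * B * ?X = B * B * 1\<^sub>m n + B * B * B" by (rule mult_add_distrib_mat) (use B BB in auto)
    moreover have "B * B * 1\<^sub>m n = B * B" by (rule right_mult_one_mat[OF BB])
    ultimately show ?thesis by simp
  qed
  finally have e: "?X * ?X * ?X = ?X * ?X + ((B + B * B) + (B * B + B * B * B))" .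
  have XXc: "?X * ?X \<in> carrier_mat n n" using X by simp
  have BBB: "B * B * B \<in> carrier_mat n n" using BB B by simp
  have S: "B + B * B \<in> carrier_mat n n" using B BB by simp
  have T: "B * B + B * B * B \<in> carrier_mat n n" using BB BBB by simp
  have "mat_trace (?X * ?X + ((B + B * B) + (B * B + B * B * B)))
     = mat_trace (?X * ?X) + ((mat_trace B + mat_trace (B * B)) + (mat_trace (B * B) + mat_trace (B * B * B)))"
    by (simp only: trace_add[OF XXc add_carrier_mat[OF T]] trace_add[OF S T] trace_add[OF B BB] trace_add[OF BB BBB])
  then show ?thesis unfolding e tr_sq_expand[OF B] by simp
qed

lemma smult_cancel: fixes A B :: "complex mat" assumes "c \<noteq> 0" "c \<cdot>\<^sub>m A = c \<cdot>\<^sub>m B"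
  shows "A = B"
proof -
  have "(1 / c) \<cdot>\<^sub>m (c \<cdot>\<^sub>m A) = (1 / c) \<cdot>\<^sub>m (c \<cdot>\<^sub>m B)" using assms by simp
  then show ?thesis using assms(1) by (simp add: smult_smult_mat one_smult_mat')
qed

lemma proj_iff: fixes B :: "complex mat"
  assumes d: "d > 0" and B: "B \<in> carrier_mat d d" and H: "mat_adjoint B = B"
    and t1: "mat_trace B = 0" and t2: "mat_trace (B * B) = complex_of_real (real d * (real d - 1))"
  shows "Re (mat_trace (B * B * B)) \<le> real d * (real d - 1) * (real d - 2)"
    and "Re (mat_trace (B * B * B)) = real d * (real d - 1) * (real d - 2)
           \<longleftrightarrow> rank_one_projector d ((1 / of_nat d) \<cdot>\<^sub>m (1\<^sub>m d + B))"
proof -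
  let ?X = "1\<^sub>m d + B"
  have X: "?X \<in> carrier_mat d d" using B by simp
  have HX: "mat_adjoint ?X = ?X" using B H by (simp add: adj_add[of _ d] adj_one)
  have tX: "mat_trace ?X = of_nat d" using B t1 by (simp add: trace_add[of _ d] trace_one)
  have t2X: "mat_trace (?X * ?X) = complex_of_real ((real d)^2)"
    using tr_sq_expand[OF B] t1 t2 by (simp add: power2_eq_square algebra_simps)
  have t3X: "mat_trace (?X * ?X * ?X) = of_nat d + 3 * complex_of_real (real d * (real d - 1)) + mat_trace (B * B * B)"
    using tr_cube_expand[OF B] t1 t2 by simp
  have re3: "Re (mat_trace (?X * ?X * ?X)) = real d + 3 * (real d * (real d - 1)) + Re (mat_trace (B * B * B))"
    using t3X by simp
  have dd: "real d * (real d - 1) * (real d - 2) = (real d)^3 - real d - 3 * (real d * (real d - 1))"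
    by (simp add: power3_eq_cube algebra_simps)
  have dpos: "real d > 0" using d by simp
  note hi = herm_ineq[OF X HX dpos t2X]
  show "Re (mat_trace (B * B * B)) \<le> real d * (real d - 1) * (real d - 2)"
    using hi(1) re3 dd by linarith
  let ?P = "(1 / of_nat d) \<cdot>\<^sub>m ?X"
  have dnz: "(of_nat d :: complex) \<noteq> 0" using d by simp
  show "Re (mat_trace (B * B * B)) = real d * (real d - 1) * (real d - 2) \<longleftrightarrow> rank_one_projector d ?P"
  proof
    assume "Re (mat_trace (B * B * B)) = real d * (real d - 1) * (real d - 2)"
    then have "Re (mat_trace (?X * ?X * ?X)) = (real d)^3" using re3 dd by linarith
    then have XX: "?X * ?X = of_nat d \<cdot>\<^sub>m ?X" using hi(2) by simp
    have PP: "?P * ?P = ?P"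
    proof -
      have "?P * ?P = ((1 / of_nat d) * (1 / of_nat d)) \<cdot>\<^sub>m (?X * ?X)" by (rule smult_prod[OF X X])
      also have "\<dots> = (1 / of_nat d) \<cdot>\<^sub>m ?X" using dnz by (simp add: XX smult_smult_mat)
      finally show ?thesis .
    qed
    have HP: "mat_adjoint ?P = ?P" using HX by (simp add: adj_smult)
    have tP: "mat_trace ?P = 1" using tX dnz by (simp add: trace_smult[OF X])
    have PC: "?P \<in> carrier_mat d d" using X by simp
    show "rank_one_projector d ?P"
      unfolding rank_one_projector_def using PC PP HP rank_one_lemma[OF PC PP HP tP] by simp
  next
    assume "rank_one_projector d ?P"
    then have PP: "?P * ?P = ?P" by (simp add: rank_one_projector_def)
    have "?P * ?P = ((1 / of_nat d) * (1 / of_nat d)) \<cdot>\<^sub>m (?X * ?X)" by (rule smult_prod[OF X X])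
    then have "((1 / of_nat d) * (1 / of_nat d)) \<cdot>\<^sub>m (?X * ?X) = (1 / of_nat d) \<cdot>\<^sub>m ?X" using PP by simp
    then have "(of_nat d * of_nat d) \<cdot>\<^sub>m (((1 / of_nat d) * (1 / of_nat d)) \<cdot>\<^sub>m (?X * ?X))
       = (of_nat d * of_nat d) \<cdot>\<^sub>m ((1 / of_nat d) \<cdot>\<^sub>m ?X)" by simp
    then have XX: "?X * ?X = of_nat d \<cdot>\<^sub>m ?X" using dnz by (simp add: smult_smult_mat one_smult_mat')
    have "?X * ?X * ?X = of_nat d \<cdot>\<^sub>m (?X * ?X)"
    proof -
      have "?X * ?X * ?X = (of_nat d \<cdot>\<^sub>m ?X) * ?X" by (simp only: XX)
      also have "\<dots> = of_nat d \<cdot>\<^sub>m (?X * ?X)" by (rule mult_smult_assoc_mat[OF X X])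
      finally show ?thesis .
    qed
    then have "mat_trace (?X * ?X * ?X) = of_nat d * mat_trace (?X * ?X)"
      using trace_smult[OF mult_carrier_mat[OF X X]] by simp
    then have "Re (mat_trace (?X * ?X * ?X)) = (real d)^3" using t2X by (simp add: power3_eq_cube power2_eq_square)
    then show "Re (mat_trace (B * B * B)) = real d * (real d - 1) * (real d - 2)" using re3 dd by linarith
  qed
qed

lemma conj_mult: fixes U P :: "complex mat"
  assumes U: "U \<in> carrier_mat n n" and P: "P \<in> carrier_mat n n" and Q: "Q \<in> carrier_mat n n"
    and UU: "mat_adjoint U * U = 1\<^sub>m n"
  shows "(U * P * mat_adjoint U) * (U * Q * mat_adjoint U) = U * (P * Q) * mat_adjoint U"
proof -
  have Ua: "mat_adjoint U \<in> carrier_mat n n" using U by simp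
  have "(U * P * mat_adjoint U) * (U * Q * mat_adjoint U) = U * (P * ((mat_adjoint U * U) * (Q * mat_adjoint U)))"
    using U P Q Ua by (simp add: assoc_mult_mat[of _ n n _ n _ n])
  also have "\<dots> = U * (P * (Q * mat_adjoint U))" using Q Ua by (simp add: UU)
  also have "\<dots> = U * (P * Q) * mat_adjoint U"
    using U P Q Ua by (simp add: assoc_mult_mat[of _ n n _ n _ n])
  finally show ?thesis .
qed

lemma conj_adj: fixes U P :: "complex mat"
  assumes U: "U \<in> carrier_mat n n" and P: "P \<in> carrier_mat n n"
  shows "mat_adjoint (U * P * mat_adjoint U) = U * mat_adjoint P * mat_adjoint U"
proof -
  have Ua: "mat_adjoint U \<in> carrier_mat n n" using U by simp
  have "mat_adjoint (U * P * mat_adjoint U) = mat_adjoint (mat_adjoint U) * mat_adjoint (U * P)"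
    using U P Ua by (intro adj_mult[of _ n]) auto
  also have "mat_adjoint (U * P) = mat_adjoint P * mat_adjoint U" using U P by (rule adj_mult)
  finally show ?thesis using U P Ua by (simp add: adj_adj assoc_mult_mat[of _ n n _ n _ n])
qed

lemma conj_trace: fixes U P :: "complex mat"
  assumes U: "U \<in> carrier_mat n n" and P: "P \<in> carrier_mat n n" and UU: "mat_adjoint U * U = 1\<^sub>m n"
  shows "mat_trace (U * P * mat_adjoint U) = mat_trace P"
proof -
  have Ua: "mat_adjoint U \<in> carrier_mat n n" using U by simp
  have "mat_trace (U * P * mat_adjoint U) = mat_trace (U * (P * mat_adjoint U))"
    using U P Ua by (simp add: assoc_mult_mat[of _ n n _ n _ n])
  also have "\<dots> = mat_trace ((P * mat_adjoint U) * U)" using U P Ua by (intro trace_comm) auto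
  also have "(P * mat_adjoint U) * U = P" using U P Ua by (simp add: assoc_mult_mat[of _ n n _ n _ n] UU)
  finally show ?thesis .
qed

lemma conj_proj: fixes U P :: "complex mat"
  assumes U: "U \<in> carrier_mat n n" and UU: "mat_adjoint U * U = 1\<^sub>m n"
    and PC: "P \<in> carrier_mat n n" and PP: "P * P = P" and HP: "mat_adjoint P = P" and tP: "mat_trace P = 1"
  shows "rank_one_projector n (U * P * mat_adjoint U)"
proof -
  let ?Q = "U * P * mat_adjoint U"
  have QC: "?Q \<in> carrier_mat n n" using mult_carrier_mat[OF mult_carrier_mat[OF U PC] adj_carrier[OF U]] .
  have QQ: "?Q * ?Q = ?Q" using conj_mult[OF U PC PC UU] PP by simp
  have HQ: "mat_adjoint ?Q = ?Q" using conj_adj[OF U PC] HP by simp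
  have tQ: "mat_trace ?Q = 1" using conj_trace[OF U PC UU] tP by simp
  show ?thesis unfolding rank_one_projector_def using QC QQ HQ rank_one_lemma[OF QC QQ HQ tQ] by simp
qed

lemma B_dims[simp]: "dim_row (Bop d theta) = d" "dim_col (Bop d theta) = d"
  by (simp_all add: B_wh wh_def)

lemma conj_smult: fixes U M :: "complex mat"
  assumes U: "U \<in> carrier_mat n n" and M: "M \<in> carrier_mat n n"
  shows "U * (c \<cdot>\<^sub>m M) * mat_adjoint U = c \<cdot>\<^sub>m (U * M * mat_adjoint U)"
proof -
  have "U * (c \<cdot>\<^sub>m M) = c \<cdot>\<^sub>m (U * M)" by (rule mult_smult_distrib[OF U M])
  moreover have "(c \<cdot>\<^sub>m (U * M)) * mat_adjoint U = c \<cdot>\<^sub>m (U * M * mat_adjoint U)"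
    by (rule mult_smult_assoc_mat[OF mult_carrier_mat[OF U M] adj_carrier[OF U]])
  ultimately show ?thesis by simp
qed

lemma Eop_alt: assumes d: "d > 0"
  shows "Eop d theta r = (1 / of_nat d) \<cdot>\<^sub>m (displ d r * ((1 / of_nat d) \<cdot>\<^sub>m (1\<^sub>m d + Bop d theta)) * mat_adjoint (displ d r))"
proof -
  let ?U = "displ d r" and ?B = "Bop d theta"
  have "?U * ((1 / of_nat d) \<cdot>\<^sub>m (1\<^sub>m d + ?B)) * mat_adjoint ?U = (1 / of_nat d) \<cdot>\<^sub>m (?U * (1\<^sub>m d + ?B) * mat_adjoint ?U)"
    by (rule conj_smult) auto
  also have "?U * (1\<^sub>m d + ?B) = ?U + ?U * ?B"
  proof -
    have "?U * (1\<^sub>m d + ?B) = ?U * 1\<^sub>m d + ?U * ?B" by (rule mult_add_distrib_mat) auto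
    then show ?thesis by simp
  qed
  also have "(?U + ?U * ?B) * mat_adjoint ?U = ?U * mat_adjoint ?U + ?U * ?B * mat_adjoint ?U"
    by (rule add_mult_distrib_mat) auto
  also have "?U * mat_adjoint ?U = 1\<^sub>m d" by (rule displ_unit1[OF d])
  finally have e: "?U * ((1 / of_nat d) \<cdot>\<^sub>m (1\<^sub>m d + ?B)) * mat_adjoint ?U = (1 / of_nat d) \<cdot>\<^sub>m (1\<^sub>m d + ?U * ?B * mat_adjoint ?U)" .
  show ?thesis unfolding e Eop_def by (simp add: smult_smult_mat power2_eq_square)
qed

lemma sic_backward: assumes d: "d > 0" and S: "rank_one_sic_povm d (Eop d theta)"
  shows "rank_one_projector d ((1 / of_nat d) \<cdot>\<^sub>m (1\<^sub>m d + Bop d theta))"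
proof -
  obtain P where P: "\<forall>r\<in>Zd2 d. rank_one_projector d (P r) \<and> Eop d theta r = (1 / of_nat d) \<cdot>\<^sub>m P r"
    using S unfolding rank_one_sic_povm_def by blast
  have z: "(0,0) \<in> Zd2 d" using zero_Zd2[OF d] .
  have r1: "rank_one_projector d (P (0,0))" and e: "Eop d theta (0,0) = (1 / of_nat d) \<cdot>\<^sub>m P (0,0)"
    using P z by auto
  have "Eop d theta (0,0) = (1 / of_nat d) \<cdot>\<^sub>m ((1 / of_nat d) \<cdot>\<^sub>m (1\<^sub>m d + Bop d theta))"
    using Eop_alt[OF d, of theta "(0,0)"] d by (simp add: displ_zero adj_one)
  then have "(1 / of_nat d) \<cdot>\<^sub>m P (0,0) = (1 / of_nat d) \<cdot>\<^sub>m ((1 / of_nat d) \<cdot>\<^sub>m (1\<^sub>m d + Bop d theta))"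
    using e by simp
  then have "P (0,0) = (1 / of_nat d) \<cdot>\<^sub>m (1\<^sub>m d + Bop d theta)"
    by (rule smult_cancel[rotated]) (use d in simp)
  then show ?thesis using r1 by simp
qed

lemma conj_1B: fixes U B :: "complex mat" assumes U: "U \<in> carrier_mat n n" and B: "B \<in> carrier_mat n n"
  and UU: "U * mat_adjoint U = 1\<^sub>m n"
  shows "U * (1\<^sub>m n + B) * mat_adjoint U = 1\<^sub>m n + U * B * mat_adjoint U"
proof -
  have "U * (1\<^sub>m n + B) = U * 1\<^sub>m n + U * B" by (rule mult_add_distrib_mat) (use U B in auto)
  also have "U * 1\<^sub>m n = U" using U by simp
  finally have e: "U * (1\<^sub>m n + B) = U + U * B" .
  have "(U + U * B) * mat_adjoint U = U * mat_adjoint U + U * B * mat_adjoint U"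
    by (rule add_mult_distrib_mat) (use U B in auto)
  then show ?thesis unfolding e UU .
qed

lemma wh_entry: "i < d \<Longrightarrow> j < d \<Longrightarrow> wh d a S $$ (i,j) = (\<Sum>q\<in>S. a q * displ d q $$ (i,j))"
  unfolding wh_def by (simp add: msum_entry)

lemma card_Zd2: "card (Zd2 d) = d^2" by (simp add: Zd2_def power2_eq_square)

lemma tau_sum_diff: assumes r: "r \<in> Zd2 d" and s: "s \<in> Zd2 d" and rs: "r \<noteq> s"
  shows "(\<Sum>q\<in>Zd2star d. tau d powi (2 * symp q (- fst s, - snd s) - 2 * symp q (- fst r, - snd r))) = -1"
proof -
  have d: "d > 0" using r by (auto simp: Zd2_def)
  let ?u = "red d (fst s - fst r, snd s - snd r)"
  have u: "?u \<in> Zd2star d" using red_diff_star[OF s r] rs by simp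
  define m1 where "m1 = (fst s - fst r) div int d"
  define m2 where "m2 = (snd s - snd r) div int d"
  have u1: "fst ?u = fst s - fst r - int d * m1" unfolding m1_def by (simp add: red_def mod_decomp)
  have u2: "snd ?u = snd s - snd r - int d * m2" unfolding m2_def by (simp add: red_def mod_decomp)
  have "(\<Sum>q\<in>Zd2star d. tau d powi (2 * symp q (- fst s, - snd s) - 2 * symp q (- fst r, - snd r)))
      = (\<Sum>q\<in>Zd2star d. tau d powi (2 * symp q (- fst ?u, - snd ?u)))"
  proof (rule sum.cong[OF refl])
    fix q
    show "tau d powi (2 * symp q (- fst s, - snd s) - 2 * symp q (- fst r, - snd r)) = tau d powi (2 * symp q (- fst ?u, - snd ?u))"
      by (rule tau_powi_cong[OF d, where n = "fst q * m2 - snd q * m1"]) (simp add: u1 u2 symp_def algebra_simps)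
  qed
  also have "\<dots> = -1" by (rule char_sum_q[OF u])
  finally show ?thesis .
qed

lemma sic_forward: assumes d: "d > 0" and H: "mat_adjoint (Bop d theta) = Bop d theta"
  and R: "rank_one_projector d ((1 / of_nat d) \<cdot>\<^sub>m (1\<^sub>m d + Bop d theta))"
  shows "rank_one_sic_povm d (Eop d theta)"
proof -
  let ?B = "Bop d theta"
  let ?Pi = "(1 / of_nat d) \<cdot>\<^sub>m (1\<^sub>m d + ?B)"
  let ?a = "\<lambda>q. cc d * ee theta q"
  define P where "P r = displ d r * ?Pi * mat_adjoint (displ d r)" for r
  define Br where "Br r = displ d r * ?B * mat_adjoint (displ d r)" for r
  have dnz: "(of_nat d :: complex) \<noteq> 0" using d by simp
  have PiC: "?Pi \<in> carrier_mat d d" and PiPi: "?Pi * ?Pi = ?Pi" and HPi: "mat_adjoint ?Pi = ?Pi"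
    using R by (auto simp: rank_one_projector_def)
  have tPi: "mat_trace ?Pi = 1"
    using dnz by (simp add: trace_smult[of _ d] trace_add[of _ d] trace_one B_trace)
  have BrC: "Br r \<in> carrier_mat d d" for r
    unfolding Br_def by (rule mult_carrier_mat[OF mult_carrier_mat[OF displ_carrier B_carrier] adj_carrier[OF displ_carrier]])
  have Br_wh: "Br r = wh d (\<lambda>q. ?a q * tau d powi (2 * symp q (- fst r, - snd r))) (Zd2star d)" for r
    unfolding Br_def B_wh by (rule wh_conj[OF d]) simp
  have trBr: "mat_trace (Br r) = 0" for r unfolding Br_wh by (rule wh_trace) simp
  have HBr: "mat_adjoint (Br r) = Br r" for r unfolding Br_def using conj_adj[of "displ d r" d ?B] H by simp
  have Palt: "P r = (1 / of_nat d) \<cdot>\<^sub>m (1\<^sub>m d + Br r)" for r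
    unfolding P_def Br_def
    by (subst conj_smult[of _ d], simp, simp, subst conj_1B[of _ d], auto simp: displ_unit1[OF d])
  have Eop_P: "Eop d theta r = (1 / of_nat d) \<cdot>\<^sub>m P r" for r unfolding P_def by (rule Eop_alt[OF d])
  have proj: "rank_one_projector d (P r)" for r
    unfolding P_def by (rule conj_proj[OF displ_carrier displ_unit2[OF d] PiC PiPi HPi tPi])
  have tr2: "mat_trace (P r * P s) = 1 / of_nat (d + 1)" if r: "r \<in> Zd2 d" and s: "s \<in> Zd2 d" and rs: "r \<noteq> s" for r s
  proof -
    have one: "1\<^sub>m d \<in> carrier_mat d d" by simp
    have e1: "P r * P s = ((1 / of_nat d) * (1 / of_nat d)) \<cdot>\<^sub>m ((1\<^sub>m d + Br r) * (1\<^sub>m d + Br s))"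
      unfolding Palt by (rule smult_prod[of _ d]) (auto simp: BrC)
    have e2: "(1\<^sub>m d + Br r) * (1\<^sub>m d + Br s) = (1\<^sub>m d + Br s) + (Br r + Br r * Br s)"
    proof -
      have "(1\<^sub>m d + Br r) * (1\<^sub>m d + Br s) = 1\<^sub>m d * (1\<^sub>m d + Br s) + Br r * (1\<^sub>m d + Br s)"
        by (rule add_mult_distrib_mat[where nc = d]) (auto simp: BrC)
      also have "1\<^sub>m d * (1\<^sub>m d + Br s) = 1\<^sub>m d + Br s" using BrC[of s] by simp
      also have "Br r * (1\<^sub>m d + Br s) = Br r * 1\<^sub>m d + Br r * Br s"
        by (rule mult_add_distrib_mat[where nc = d and n = d and nr = d]) (auto simp: BrC)
      also have "Br r * 1\<^sub>m d = Br r" using BrC[of r] by simp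
      finally show ?thesis .
    qed
    have e3: "mat_trace ((1\<^sub>m d + Br s) + (Br r + Br r * Br s))
        = (of_nat d + mat_trace (Br s)) + (mat_trace (Br r) + mat_trace (Br r * Br s))"
      using BrC[of r] BrC[of s] by (simp add: trace_add[of _ d] trace_one)
    have e4: "mat_trace (Br r * Br s) = - of_nat d / of_nat (d + 1)"
    proof -
      have "mat_trace (Br r * Br s) = mat_trace (mat_adjoint (Br r) * Br s)" using HBr by simp
      also have "\<dots> = of_nat d * (\<Sum>q\<in>Zd2star d. cnj (?a q * tau d powi (2 * symp q (- fst r, - snd r)))
                  * (?a q * tau d powi (2 * symp q (- fst s, - snd s))))"
        unfolding Br_wh by (rule wh_trace_adj_prod) (auto simp: Zd2star_def)
      also have "(\<Sum>q\<in>Zd2star d. cnj (?a q * tau d powi (2 * symp q (- fst r, - snd r)))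
                  * (?a q * tau d powi (2 * symp q (- fst s, - snd s))))
          = (\<Sum>q\<in>Zd2star d. complex_of_real (1 / (real d + 1)) * tau d powi (2 * symp q (- fst s, - snd s) - 2 * symp q (- fst r, - snd r)))"
      proof (rule sum.cong[OF refl])
        fix q
        have "cnj (?a q * tau d powi (2 * symp q (- fst r, - snd r))) * (?a q * tau d powi (2 * symp q (- fst s, - snd s)))
           = (cc d * cc d) * (cnj (ee theta q) * ee theta q) * (tau d powi (- (2 * symp q (- fst r, - snd r))) * tau d powi (2 * symp q (- fst s, - snd s)))"
          using tau_powi_cnj[OF d] by (simp add: cc_cnj mult_ac)
        also have "\<dots> = complex_of_real (1 / (real d + 1)) * tau d powi (2 * symp q (- fst s, - snd s) - 2 * symp q (- fst r, - snd r))"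
          by (simp add: cc_sq ee_norm tau_powi_add[symmetric])
        finally show "cnj (?a q * tau d powi (2 * symp q (- fst r, - snd r))) * (?a q * tau d powi (2 * symp q (- fst s, - snd s)))
           = complex_of_real (1 / (real d + 1)) * tau d powi (2 * symp q (- fst s, - snd s) - 2 * symp q (- fst r, - snd r))" .
      qed
      also have "\<dots> = complex_of_real (1 / (real d + 1)) * (-1)"
        by (simp only: sum_distrib_left[symmetric] tau_sum_diff[OF r s rs])
      finally show ?thesis by (simp add: of_real_divide)
    qed
    have MC: "(1\<^sub>m d + Br s) + (Br r + Br r * Br s) \<in> carrier_mat d d" using BrC[of r] BrC[of s] by simp
    have "mat_trace (P r * P s) = ((1 / of_nat d) * (1 / of_nat d)) * mat_trace ((1\<^sub>m d + Br s) + (Br r + Br r * Br s))"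
      unfolding e1 e2 by (rule trace_smult[OF MC])
    also have "\<dots> = ((1 / of_nat d) * (1 / of_nat d)) * (of_nat d - of_nat d / of_nat (d + 1))"
      unfolding e3 e4 trBr by simp
    also have "\<dots> = 1 / of_nat (d + 1)"
    proof -
      have d1: "(1 + of_nat d :: complex) \<noteq> 0"
        by (metis add.commute of_nat_Suc of_nat_eq_0_iff Suc_neq_Zero)
      show ?thesis using dnz d1 by (simp add: field_simps)
    qed
    finally show ?thesis .
  qed
  have msumE: "msum d (Eop d theta) (Zd2 d) = 1\<^sub>m d"
  proof (rule eq_matI)
    fix i j assume "i < dim_row (1\<^sub>m d :: complex mat)" "j < dim_col (1\<^sub>m d :: complex mat)"
    then have i: "i < d" and j: "j < d" by auto
    have E: "Eop d theta r $$ (i,j) = (1 / of_nat (d^2)) * ((if i = j then 1 else 0) + Br r $$ (i,j))" for r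
      unfolding Eop_def Br_def[symmetric] using i j BrC[of r] by simp
    have "(\<Sum>r\<in>Zd2 d. Br r $$ (i,j)) = (\<Sum>r\<in>Zd2 d. \<Sum>q\<in>Zd2star d. ?a q * displ d q $$ (i,j) * tau d powi (2 * symp q (- fst r, - snd r)))"
      unfolding Br_wh using i j by (simp add: wh_entry mult_ac)
    also have "\<dots> = (\<Sum>q\<in>Zd2star d. ?a q * displ d q $$ (i,j) * (\<Sum>r\<in>Zd2 d. tau d powi (2 * symp q (- fst r, - snd r))))"
      by (subst sum.swap) (simp add: sum_distrib_left)
    also have "\<dots> = 0" by (simp add: char_sum_r)
    finally have z: "(\<Sum>r\<in>Zd2 d. Br r $$ (i,j)) = 0" .
    have "msum d (Eop d theta) (Zd2 d) $$ (i,j) = (\<Sum>r\<in>Zd2 d. (1 / of_nat (d^2)) * ((if i = j then 1 else 0) + Br r $$ (i,j)))"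
      using i j by (simp add: msum_entry E)
    also have "\<dots> = (1 / of_nat (d^2)) * (of_nat (d^2) * (if i = j then 1 else 0) + (\<Sum>r\<in>Zd2 d. Br r $$ (i,j)))"
      by (cases "i = j") (simp_all add: sum_divide_distrib[symmetric] sum.distrib card_Zd2)
    also have "\<dots> = 1\<^sub>m d $$ (i,j)" using i j z d by simp
    finally show "msum d (Eop d theta) (Zd2 d) $$ (i,j) = 1\<^sub>m d $$ (i,j)" .
  qed auto
  show ?thesis unfolding rank_one_sic_povm_def
    using proj Eop_P tr2 msumE by blast
qed

lemma powr32: assumes "x > 0" shows "x powr (3/2) = sqrt x ^ 3"
proof -
  have e: "(3/2::real) = 1 + 1/2" by simp
  have "x powr (3/2) = x powr (1 + 1/2)" by (simp only: e)
  also have "\<dots> = x powr 1 * x powr (1/2)" by (rule powr_add)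
  also have "x powr 1 = x" using assms by simp
  also have "x powr (1/2) = sqrt x" using assms by (simp add: powr_half_sqrt)
  also have "x * sqrt x = sqrt x ^ 3" using assms by (simp add: power3_eq_cube)
  finally show ?thesis .
qed

theorem mainTheorem7:
  fixes d :: nat and theta :: "int \<times> int \<Rightarrow> real"
  assumes d2: "d \<ge> 2"
    and sym: "\<forall>q\<in>Zd2star d. exp (\<i> * complex_of_real (theta (bar d q)))
               = sgn_s d (- fst q, - snd q) * exp (- \<i> * complex_of_real (theta q))"
  defines "LHS \<equiv> (\<Sum>(p,q) \<in> {(p,q). p \<in> Zd2star d \<and> q \<in> Zd2star d \<and> oplus d p q \<in> Zd2star d}.
               sgn_s d (fst p + fst q, snd p + snd q) * tau d powi (symp p q)
               * exp (\<i> * complex_of_real (theta p + theta q - theta (oplus d p q))))"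
    and "bound \<equiv> (real d - 1) * (real d - 2) * (real d + 1) powr (3/2)"
  shows "Im LHS = 0 \<and> Re LHS \<le> bound
     \<and> (Re LHS = bound \<longleftrightarrow> rank_one_projector d ((1 / of_nat d) \<cdot>\<^sub>m (1\<^sub>m d + Bop d theta)))
     \<and> (Re LHS = bound \<longleftrightarrow> rank_one_sic_povm d (Eop d theta))"
proof -
  have d: "d > 0" using d2 by simp
  let ?B = "Bop d theta"
  have H: "mat_adjoint ?B = ?B" by (rule B_herm[OF d sym])
  have BC: "?B \<in> carrier_mat d d" by simp
  note pi = proj_iff[OF d BC H B_trace B_sq[OF d H]]
  have cube: "mat_trace (?B * ?B * ?B) = cc d * cc d * cc d * of_nat d * LHS"
    unfolding LHS_def by (rule B_cube[OF d H])
  define s where "s = sqrt (real d + 1)"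
  have s0: "s > 0" unfolding s_def by simp
  define k where "k = (1 / s) ^ 3 * real d"
  have k0: "k > 0" unfolding k_def using s0 d by simp
  have ccs: "cc d = complex_of_real (1 / s)" by (simp add: cc_def s_def)
  have ck: "cc d * cc d * cc d * of_nat d = complex_of_real k"
    unfolding ccs k_def by (simp add: power3_eq_cube)
  have tr: "mat_trace (?B * ?B * ?B) = complex_of_real k * LHS" using cube ck by simp
  have real: "cnj (mat_trace (?B * ?B * ?B)) = mat_trace (?B * ?B * ?B)"
  proof -
    have "mat_adjoint (?B * ?B * ?B) = mat_adjoint ?B * mat_adjoint (?B * ?B)"
      by (rule adj_mult[of _ d]) auto
    also have "mat_adjoint (?B * ?B) = ?B * ?B" using adj_mult[OF BC BC] H by simp
    also have "mat_adjoint ?B * (?B * ?B) = ?B * ?B * ?B" using H BC by (simp add: assoc_mult_mat[of _ d d _ d _ d])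
    finally have "mat_adjoint (?B * ?B * ?B) = ?B * ?B * ?B" .
    moreover have "?B * ?B * ?B \<in> carrier_mat d d" by (rule mult_carrier_mat[OF mult_carrier_mat[OF BC BC] BC])
    ultimately show ?thesis using trace_adj[of "?B * ?B * ?B" d] by simp
  qed
  have ImT: "Im (mat_trace (?B * ?B * ?B)) = k * Im LHS" and ReT: "Re (mat_trace (?B * ?B * ?B)) = k * Re LHS"
    using tr by simp_all
  have "Im (mat_trace (?B * ?B * ?B)) = 0" using arg_cong[OF real, of Im] by simp
  then have Im0: "Im LHS = 0" using ImT k0 by simp
  have kb: "k * bound = real d * (real d - 1) * (real d - 2)"
  proof -
    have "(real d + 1) powr (3/2) = s ^ 3" unfolding s_def by (rule powr32) simp
    then have "k * bound = (1 / s) ^ 3 * s ^ 3 * (real d * (real d - 1) * (real d - 2))"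
      unfolding k_def assms(4) by (simp add: mult_ac)
    also have "(1 / s) ^ 3 * s ^ 3 = 1" using s0 by (simp add: power_divide)
    finally show ?thesis by simp
  qed
  have le: "Re LHS \<le> bound"
  proof -
    have "k * Re LHS \<le> k * bound" using pi(1) ReT kb by simp
    then show ?thesis using k0 by simp
  qed
  have eqiff: "Re LHS = bound \<longleftrightarrow> Re (mat_trace (?B * ?B * ?B)) = real d * (real d - 1) * (real d - 2)"
    using ReT kb k0 by (metis mult_cancel_left less_irrefl)
  have P: "Re LHS = bound \<longleftrightarrow> rank_one_projector d ((1 / of_nat d) \<cdot>\<^sub>m (1\<^sub>m d + ?B))"
    using eqiff pi(2) by simp
  have S: "rank_one_projector d ((1 / of_nat d) \<cdot>\<^sub>m (1\<^sub>m d + ?B)) \<longleftrightarrow> rank_one_sic_povm d (Eop d theta)"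
    using sic_forward[OF d H] sic_backward[OF d] by blast
  show ?thesis using Im0 le P S by simp
qed

end
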